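(* If the curvature $k$ vanishes at only finitely many points of $[0,1]$, then $\mathcal G=L^2(\omega)$.
   Context: Let $\gamma:[0,1]\to\mathbb{R}^3$, $\gamma(s)=(0,\gamma_2(s),\gamma_3(s))$, be a simple planar curve of class $C^6$ parametrized by arclength; $\tau:=\dot\gamma$, $n:=(0,-\tau_3,\tau_2)$, $k:=\dot\tau\cdot n$ is the curvature. Let $\omega=(0,L)\times(0,1)$ with coordinates $(x_1,s)$. Define $\mathcal G$ as the set of $g\in L^2(\omega)$ for which there exists a family $(v^\epsilon)_{\epsilon>0}\subset C^5(\overline\omega;\mathbb{R}^3)$ with $\partial_sv^\epsilon_1+\partial_1v^\epsilon\cdot\tau=0$ and $\partial_sv^\epsilon\cdot\tau=0$ in $\omega$ for every $\epsilon$, and $\partial_1v_1^\epsilon\to g$ strongly in $L^2(\omega)$ as $\epsilon\to0$. *)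

theory Defs
  imports "HOL-Analysis.Analysis"
begin

fun Ck_interval :: "nat \<Rightarrow> (real \<Rightarrow> 'a::real_normed_vector) \<Rightarrow> bool" where
  "Ck_interval 0 f = continuous_on {0..1} f"
| "Ck_interval (Suc k) f =
     (continuous_on {0..1} f \<and>
      (\<forall>t\<in>{0..1}. f differentiable (at t within {0..1})) \<and>
      Ck_interval k (\<lambda>t. vector_derivative f (at t within {0..1})))"

definition omega_cl :: "real \<Rightarrow> (real \<times> real) set" where
  "omega_cl L = {0..L} \<times> {0..1}"

definition omega :: "real \<Rightarrow> (real \<times> real) set" where
  "omega L = {0<..<L} \<times> {0<..<1}"

text \<open>Partial derivatives with respect to x1 and s (taken relative to the closed rectangle;
at points of omega these are the ordinary partial derivatives).\<close>
definition pd1 :: "real \<Rightarrow> (real \<times> real \<Rightarrow> 'a::real_normed_vector) \<Rightarrow> real \<times> real \<Rightarrow> 'a" where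
  "pd1 L f p = vector_derivative (\<lambda>t. f (t, snd p)) (at (fst p) within {0..L})"

definition pd2 :: "real \<Rightarrow> (real \<times> real \<Rightarrow> 'a::real_normed_vector) \<Rightarrow> real \<times> real \<Rightarrow> 'a" where
  "pd2 L f p = vector_derivative (\<lambda>s. f (fst p, s)) (at (snd p) within {0..1})"

fun Ck_rect :: "real \<Rightarrow> nat \<Rightarrow> (real \<times> real \<Rightarrow> 'a::real_normed_vector) \<Rightarrow> bool" where
  "Ck_rect L 0 f = continuous_on (omega_cl L) f"
| "Ck_rect L (Suc k) f =
     (continuous_on (omega_cl L) f \<and>
      (\<forall>p\<in>omega_cl L. (\<lambda>t. f (t, snd p)) differentiable (at (fst p) within {0..L})
                     \<and> (\<lambda>s. f (fst p, s)) differentiable (at (snd p) within {0..1})) \<and>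
      Ck_rect L k (pd1 L f) \<and> Ck_rect L k (pd2 L f))"

definition tang :: "(real \<Rightarrow> real^3) \<Rightarrow> real \<Rightarrow> real^3" where
  "tang \<gamma> s = vector_derivative \<gamma> (at s within {0..1})"

definition nrm :: "(real \<Rightarrow> real^3) \<Rightarrow> real \<Rightarrow> real^3" where
  "nrm \<gamma> s = vector [0, - (tang \<gamma> s $ 3), tang \<gamma> s $ 2]"

definition curv :: "(real \<Rightarrow> real^3) \<Rightarrow> real \<Rightarrow> real" where
  "curv \<gamma> s = vector_derivative (tang \<gamma>) (at s within {0..1}) \<bullet> nrm \<gamma> s"

definition L2 :: "real \<Rightarrow> (real \<times> real \<Rightarrow> real) set" where
  "L2 L = {g. g \<in> borel_measurable (lebesgue_on (omega L)) \<and>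
              (\<integral>\<^sup>+ p. ennreal ((g p)\<^sup>2) \<partial>lebesgue_on (omega L)) < \<infinity>}"

definition calG :: "real \<Rightarrow> (real \<Rightarrow> real^3) \<Rightarrow> (real \<times> real \<Rightarrow> real) set" where
  "calG L \<gamma> = {g \<in> L2 L. \<exists>v :: real \<Rightarrow> real \<times> real \<Rightarrow> real^3.
      (\<forall>\<epsilon>>0. Ck_rect L 5 (v \<epsilon>) \<and>
         (\<forall>p\<in>omega L.
            pd2 L (\<lambda>q. v \<epsilon> q $ 1) p + pd1 L (v \<epsilon>) p \<bullet> tang \<gamma> (snd p) = 0 \<and>
            pd2 L (v \<epsilon>) p \<bullet> tang \<gamma> (snd p) = 0)) \<and>
      ((\<lambda>\<epsilon>. \<integral>\<^sup>+ p. ennreal ((pd1 L (\<lambda>q. v \<epsilon> q $ 1) p - g p)\<^sup>2) \<partial>lebesgue_on (omega L))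
         \<longlongrightarrow> 0) (at_right 0)}"

end

theory Submission
  imports Defs
begin



lemma Ck_interval_cong:
  fixes f g :: "real \<Rightarrow> 'a::real_normed_vector"
  assumes "\<forall>t\<in>{0..1}. f t = g t" "Ck_interval k f"
  shows "Ck_interval k g"
  using assms
proof (induction k arbitrary: f g)
  case 0
  have "continuous_on {0..1} f" using 0 by simp
  then show ?case using 0(1) continuous_on_cong[OF refl, of "{0..1}" f g] by auto
next
  case (Suc k)
  have eq: "\<And>t. t \<in> {0..1} \<Longrightarrow> vector_derivative f (at t within {0..1}) = vector_derivative g (at t within {0..1})"
    using Suc.prems(1) by (intro vector_derivative_cong_eq) auto
  have "continuous_on {0..1} f" using Suc.prems by simp
  then have c: "continuous_on {0..1} g" using Suc.prems(1) continuous_on_cong[OF refl, of "{0..1}" f g] by auto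
  have d: "\<forall>t\<in>{0..1}. g differentiable (at t within {0..1})"
  proof
    fix t :: real assume t: "t \<in> {0..1}"
    then have "f differentiable (at t within {0..1})" using Suc.prems by simp
    then obtain D where D: "(f has_derivative D) (at t within {0..1})" unfolding differentiable_def by blast
    have "(g has_derivative D) (at t within {0..1})"
      by (rule has_derivative_transform[OF t _ D]) (use Suc.prems(1) in auto)
    then show "g differentiable (at t within {0..1})" unfolding differentiable_def by blast
  qed
  have "Ck_interval k (\<lambda>t. vector_derivative g (at t within {0..1}))"
    using Suc.IH[of "\<lambda>t. vector_derivative f (at t within {0..1})"] Suc.prems eq by auto
  then show ?case using c d by simp
qed

lemma Ck_interval_mono:
  fixes f :: "real \<Rightarrow> 'a::real_normed_vector"
  shows "Ck_interval (Suc k) f \<Longrightarrow> Ck_interval k f"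
proof (induction k arbitrary: f)
  case 0 then show ?case by simp
next
  case (Suc k) then show ?case by (metis Ck_interval.simps(2))
qed

lemma Ck_interval_le:
  fixes f :: "real \<Rightarrow> 'a::real_normed_vector"
  shows "Ck_interval k f \<Longrightarrow> j \<le> k \<Longrightarrow> Ck_interval j f"
proof (induction k)
  case 0 then show ?case by simp
next
  case (Suc k) then show ?case using Ck_interval_mono le_Suc_eq by blast
qed

lemma Ck_interval_cont: "Ck_interval k f \<Longrightarrow> continuous_on {0..1} f"
  by (cases k) auto

abbreviation Dv :: "(real \<Rightarrow> 'a::real_normed_vector) \<Rightarrow> real \<Rightarrow> 'a" where
  "Dv f \<equiv> (\<lambda>t. vector_derivative f (at t within {0..1}))"

lemma Ck_SucI:
  fixes f :: "real \<Rightarrow> 'a::euclidean_space"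
  assumes d: "\<And>t. t\<in>{0..1} \<Longrightarrow> (f has_vector_derivative f' t) (at t within {0..1})"
    and c: "Ck_interval k f'"
  shows "Ck_interval (Suc k) f"
proof -
  have "continuous_on {0..1} f" using d by (rule continuous_on_vector_derivative)
  moreover have "\<forall>t\<in>{0..1}. f differentiable (at t within {0..1})"
    using d differentiableI_vector by blast
  moreover have "\<forall>t\<in>{0..1}. f' t = Dv f t"
  proof
    fix t :: real assume t: "t \<in> {0..1}"
    show "f' t = Dv f t" using vector_derivative_within_closed_interval[OF zero_less_one t d[OF t]] by simp
  qed
  then have "Ck_interval k (Dv f)" by (rule Ck_interval_cong[OF _ c])
  ultimately show ?thesis by simp
qed

lemma Ck_SucD:
  fixes f :: "real \<Rightarrow> 'a::real_normed_vector"
  assumes "Ck_interval (Suc k) f" "t \<in> {0..1}"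
  shows "(f has_vector_derivative Dv f t) (at t within {0..1})"
  using assms by (simp add: vector_derivative_works)

lemma Ck_SucD2:
  fixes f :: "real \<Rightarrow> 'a::real_normed_vector"
  assumes "Ck_interval (Suc k) f"
  shows "Ck_interval k (Dv f)"
  using assms by simp

lemma Ck_add:
  fixes f g :: "real \<Rightarrow> 'a::euclidean_space"
  shows "Ck_interval k f \<Longrightarrow> Ck_interval k g \<Longrightarrow> Ck_interval k (\<lambda>t. f t + g t)"
proof (induction k arbitrary: f g)
  case 0 then show ?case by (auto intro: continuous_intros)
next
  case (Suc k)
  show ?case
    by (rule Ck_SucI[where f'="\<lambda>t. Dv f t + Dv g t"])
       (use Suc in \<open>auto intro!: has_vector_derivative_add Ck_SucD\<close>)
qed

lemma Ck_linear:
  fixes f :: "real \<Rightarrow> 'a::euclidean_space" and J :: "'a \<Rightarrow> 'b::euclidean_space"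
  assumes J: "bounded_linear J"
  shows "Ck_interval k f \<Longrightarrow> Ck_interval k (\<lambda>t. J (f t))"
proof (induction k arbitrary: f)
  case 0 then show ?case
    using J by (auto intro: continuous_on_compose2[OF linear_continuous_on[OF J]])
next
  case (Suc k)
  show ?case
    by (rule Ck_SucI[where f'="\<lambda>t. J (Dv f t)"])
       (use Suc in \<open>auto intro!: bounded_linear.has_vector_derivative[OF J] Ck_SucD\<close>)
qed

lemma Ck_bilinear:
  fixes f :: "real \<Rightarrow> 'a::euclidean_space" and g :: "real \<Rightarrow> 'b::euclidean_space"
    and prod :: "'a \<Rightarrow> 'b \<Rightarrow> 'c::euclidean_space"
  assumes P: "bounded_bilinear prod"
  shows "Ck_interval k f \<Longrightarrow> Ck_interval k g \<Longrightarrow> Ck_interval k (\<lambda>t. prod (f t) (g t))"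
proof (induction k arbitrary: f g)
  case 0 then show ?case
    using bounded_bilinear.continuous_on[OF P] by auto
next
  case (Suc k)
  have "Ck_interval k (\<lambda>t. prod (f t) (Dv g t))"
    using Suc.IH[OF Ck_interval_mono[OF Suc.prems(1)] Ck_SucD2[OF Suc.prems(2)]] .
  moreover have "Ck_interval k (\<lambda>t. prod (Dv f t) (g t))"
    using Suc.IH[OF Ck_SucD2[OF Suc.prems(1)] Ck_interval_mono[OF Suc.prems(2)]] .
  ultimately have "Ck_interval k (\<lambda>t. prod (f t) (Dv g t) + prod (Dv f t) (g t))"
    by (rule Ck_add)
  then show ?case
    by (rule Ck_SucI[rotated])
       (use Suc in \<open>auto intro!: bounded_bilinear.has_vector_derivative[OF P] Ck_SucD\<close>)
qed

lemma Ck_const: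
  fixes c :: "'a::euclidean_space"
  shows "Ck_interval k (\<lambda>t. c)"
proof (induction k arbitrary: c)
  case 0 then show ?case by simp
next
  case (Suc k) then show ?case by (intro Ck_SucI[where f'="\<lambda>t. 0"]) auto
qed

lemma Ck_poly:
  fixes p :: "real \<Rightarrow> real"
  shows "real_polynomial_function p \<Longrightarrow> Ck_interval k p"
proof (induction k arbitrary: p)
  case 0 then show ?case
    by (simp add: continuous_on_polymonial_function real_polynomial_function_eq)
next
  case (Suc k)
  obtain p' where p': "real_polynomial_function p'" "\<And>x. (p has_real_derivative p' x) (at x)"
    using has_real_derivative_polynomial_function[OF Suc.prems] by blast
  show ?case
    by (rule Ck_SucI[where f'=p'])
       (use p' Suc.IH in \<open>auto simp: has_real_derivative_iff_has_vector_derivative[symmetric] intro: has_field_derivative_at_within\<close>)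
qed

lemma Ck_integral:
  fixes f :: "real \<Rightarrow> 'a::euclidean_space"
  assumes "Ck_interval k f"
  shows "Ck_interval (Suc k) (\<lambda>s. integral {0..s} f)"
  by (rule Ck_SucI[where f'=f]) (use integral_has_vector_derivative[OF Ck_interval_cont[OF assms]] assms in auto)




lemma omega_cl_iff: "p \<in> omega_cl L \<longleftrightarrow> fst p \<in> {0..L} \<and> snd p \<in> {0..1}"
  by (cases p) (auto simp: omega_cl_def)

lemma omega_sub: "omega L \<subseteq> omega_cl L"
  by (auto simp: omega_def omega_cl_def)

lemma pd1_eq:
  fixes f :: "real \<times> real \<Rightarrow> 'a::euclidean_space"
  assumes "L > 0" "p \<in> omega_cl L" "((\<lambda>t. f (t, snd p)) has_vector_derivative D) (at (fst p) within {0..L})"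
  shows "pd1 L f p = D"
  unfolding pd1_def using assms by (intro vector_derivative_within_closed_interval) (auto simp: omega_cl_iff)

lemma pd2_eq:
  fixes f :: "real \<times> real \<Rightarrow> 'a::euclidean_space"
  assumes "p \<in> omega_cl L" "((\<lambda>s. f (fst p, s)) has_vector_derivative D) (at (snd p) within {0..1})"
  shows "pd2 L f p = D"
  unfolding pd2_def using assms by (intro vector_derivative_within_closed_interval) (auto simp: omega_cl_iff)

lemma pd1_works:
  "(\<lambda>t. f (t, snd p)) differentiable (at (fst p) within {0..L}) \<Longrightarrow>
   ((\<lambda>t. f (t, snd p)) has_vector_derivative pd1 L f p) (at (fst p) within {0..L})"
  unfolding pd1_def by (simp add: vector_derivative_works)

lemma pd2_works:
  "(\<lambda>s. f (fst p, s)) differentiable (at (snd p) within {0..1}) \<Longrightarrow>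
   ((\<lambda>s. f (fst p, s)) has_vector_derivative pd2 L f p) (at (snd p) within {0..1})"
  unfolding pd2_def by (simp add: vector_derivative_works)

lemma Ck_rect_cong:
  fixes f g :: "real \<times> real \<Rightarrow> 'a::real_normed_vector"
  assumes "\<forall>p\<in>omega_cl L. f p = g p" "Ck_rect L k f"
  shows "Ck_rect L k g"
  using assms
proof (induction k arbitrary: f g)
  case 0
  have "continuous_on (omega_cl L) f" using 0 by simp
  then show ?case using 0(1) continuous_on_cong[OF refl, of "omega_cl L" f g] by auto
next
  case (Suc k)
  have "continuous_on (omega_cl L) f" using Suc.prems by simp
  then have c: "continuous_on (omega_cl L) g" using Suc.prems(1) continuous_on_cong[OF refl, of "omega_cl L" f g] by auto
  have e1: "\<forall>p\<in>omega_cl L. pd1 L f p = pd1 L g p"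
  proof
    fix p assume p: "p \<in> omega_cl L"
    show "pd1 L f p = pd1 L g p" unfolding pd1_def
      by (intro vector_derivative_cong_eq) (use p Suc.prems(1) in \<open>auto simp: omega_cl_iff\<close>)
  qed
  have e2: "\<forall>p\<in>omega_cl L. pd2 L f p = pd2 L g p"
  proof
    fix p assume p: "p \<in> omega_cl L"
    show "pd2 L f p = pd2 L g p" unfolding pd2_def
      by (intro vector_derivative_cong_eq) (use p Suc.prems(1) in \<open>auto simp: omega_cl_iff\<close>)
  qed
  have d: "\<forall>p\<in>omega_cl L. (\<lambda>t. g (t, snd p)) differentiable (at (fst p) within {0..L})
                     \<and> (\<lambda>s. g (fst p, s)) differentiable (at (snd p) within {0..1})"
  proof
    fix p assume p: "p \<in> omega_cl L"
    have 1: "(\<lambda>t. f (t, snd p)) differentiable (at (fst p) within {0..L})"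
     and 2: "(\<lambda>s. f (fst p, s)) differentiable (at (snd p) within {0..1})" using Suc.prems p by auto
    obtain D1 where D1: "((\<lambda>t. f (t, snd p)) has_derivative D1) (at (fst p) within {0..L})"
      using 1 unfolding differentiable_def by blast
    obtain D2 where D2: "((\<lambda>s. f (fst p, s)) has_derivative D2) (at (snd p) within {0..1})"
      using 2 unfolding differentiable_def by blast
    have "((\<lambda>t. g (t, snd p)) has_derivative D1) (at (fst p) within {0..L})"
      by (rule has_derivative_transform[OF _ _ D1]) (use p Suc.prems(1) in \<open>auto simp: omega_cl_iff\<close>)
    moreover have "((\<lambda>s. g (fst p, s)) has_derivative D2) (at (snd p) within {0..1})"
      by (rule has_derivative_transform[OF _ _ D2]) (use p Suc.prems(1) in \<open>auto simp: omega_cl_iff\<close>)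
    ultimately show "(\<lambda>t. g (t, snd p)) differentiable (at (fst p) within {0..L})
                     \<and> (\<lambda>s. g (fst p, s)) differentiable (at (snd p) within {0..1})"
      unfolding differentiable_def by blast
  qed
  have "Ck_rect L k (pd1 L g)" using Suc.IH[OF e1] Suc.prems by simp
  moreover have "Ck_rect L k (pd2 L g)" using Suc.IH[OF e2] Suc.prems by simp
  ultimately show ?case using c d by simp
qed

lemma Ck_rect_add:
  fixes f g :: "real \<times> real \<Rightarrow> 'a::euclidean_space"
  assumes L: "L > 0"
  shows "Ck_rect L k f \<Longrightarrow> Ck_rect L k g \<Longrightarrow> Ck_rect L k (\<lambda>p. f p + g p)"
proof (induction k arbitrary: f g)
  case 0 then show ?case by (auto intro: continuous_intros)
next
  case (Suc k)
  have e1: "\<forall>p\<in>omega_cl L. pd1 L f p + pd1 L g p = pd1 L (\<lambda>p. f p + g p) p"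
  proof
    fix p assume p: "p \<in> omega_cl L"
    show "pd1 L f p + pd1 L g p = pd1 L (\<lambda>p. f p + g p) p"
      by (rule pd1_eq[OF L p, symmetric]) (use Suc.prems p in \<open>auto intro!: has_vector_derivative_add pd1_works\<close>)
  qed
  have e2: "\<forall>p\<in>omega_cl L. pd2 L f p + pd2 L g p = pd2 L (\<lambda>p. f p + g p) p"
  proof
    fix p assume p: "p \<in> omega_cl L"
    show "pd2 L f p + pd2 L g p = pd2 L (\<lambda>p. f p + g p) p"
      by (rule pd2_eq[OF p, symmetric]) (use Suc.prems p in \<open>auto intro!: has_vector_derivative_add pd2_works\<close>)
  qed
  have "Ck_rect L k (pd1 L (\<lambda>p. f p + g p))"
    using Ck_rect_cong[OF e1 Suc.IH] Suc.prems by simp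
  moreover have "Ck_rect L k (pd2 L (\<lambda>p. f p + g p))"
    using Ck_rect_cong[OF e2 Suc.IH] Suc.prems by simp
  moreover have "continuous_on (omega_cl L) (\<lambda>p. f p + g p)"
    using Suc.prems by (auto intro: continuous_intros)
  moreover have "\<forall>p\<in>omega_cl L. (\<lambda>t. f (t, snd p) + g (t, snd p)) differentiable (at (fst p) within {0..L})
                     \<and> (\<lambda>s. f (fst p, s) + g (fst p, s)) differentiable (at (snd p) within {0..1})"
    using Suc.prems by (auto intro: differentiable_add)
  ultimately show ?case by simp
qed

lemma hvd_pow_scale:
  "((\<lambda>t. t ^ m *\<^sub>R c) has_vector_derivative ((real m * x ^ (m - 1)) *\<^sub>R c)) (at x within S)"
proof -
  have "((\<lambda>t. t ^ m) has_real_derivative (real m * x ^ (m - 1))) (at x within S)"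
    using DERIV_pow[of m x S] by simp
  from has_vector_derivative_scaleR[OF this has_vector_derivative_const[of c]]
  show ?thesis by simp
qed

lemma Ck_rect_prod:
  fixes \<psi> :: "real \<Rightarrow> 'a::euclidean_space"
  assumes L: "L > 0"
  shows "Ck_interval k \<psi> \<Longrightarrow> Ck_rect L k (\<lambda>p. fst p ^ m *\<^sub>R \<psi> (snd p))"
proof (induction k arbitrary: m \<psi>)
  case 0
  have "continuous_on (omega_cl L) (\<lambda>p. \<psi> (snd p))"
    by (rule continuous_on_compose2[OF Ck_interval_cont[OF 0] continuous_on_snd]) (auto simp: omega_cl_iff)
  then show ?case by (auto intro!: continuous_intros)
next
  case (Suc k)
  have cont: "continuous_on (omega_cl L) (\<lambda>p. \<psi> (snd p))"
    by (rule continuous_on_compose2[OF Ck_interval_cont[OF Suc.prems] continuous_on_snd]) (auto simp: omega_cl_iff)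
  have d2: "((\<lambda>s. fst p ^ m *\<^sub>R \<psi> s) has_vector_derivative fst p ^ m *\<^sub>R Dv \<psi> (snd p)) (at (snd p) within {0..1})"
    if "p \<in> omega_cl L" for p
    using Ck_SucD[OF Suc.prems, of "snd p"] that
    by (auto simp: omega_cl_iff intro!: bounded_linear.has_vector_derivative[OF bounded_linear_scaleR_right])
  have e1: "\<forall>p\<in>omega_cl L. fst p ^ (m - 1) *\<^sub>R (real m *\<^sub>R \<psi> (snd p)) = pd1 L (\<lambda>p. fst p ^ m *\<^sub>R \<psi> (snd p)) p"
  proof
    fix p :: "real \<times> real" assume p: "p \<in> omega_cl L"
    show "fst p ^ (m - 1) *\<^sub>R (real m *\<^sub>R \<psi> (snd p)) = pd1 L (\<lambda>p. fst p ^ m *\<^sub>R \<psi> (snd p)) p"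
      by (rule pd1_eq[OF L p, symmetric]) (use hvd_pow_scale[of m "\<psi> (snd p)" "fst p"] in \<open>simp add: mult.commute\<close>)
  qed
  have e2: "\<forall>p\<in>omega_cl L. fst p ^ m *\<^sub>R Dv \<psi> (snd p) = pd2 L (\<lambda>p. fst p ^ m *\<^sub>R \<psi> (snd p)) p"
  proof
    fix p :: "real \<times> real" assume p: "p \<in> omega_cl L"
    show "fst p ^ m *\<^sub>R Dv \<psi> (snd p) = pd2 L (\<lambda>p. fst p ^ m *\<^sub>R \<psi> (snd p)) p"
      by (rule pd2_eq[OF p, symmetric]) (use d2[OF p] in simp)
  qed
  have "Ck_interval k (\<lambda>s. real m *\<^sub>R \<psi> s)"
    using Ck_linear[OF bounded_linear_scaleR_right Ck_interval_mono[OF Suc.prems]] .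
  then have "Ck_rect L k (pd1 L (\<lambda>p. fst p ^ m *\<^sub>R \<psi> (snd p)))"
    using Ck_rect_cong[OF e1 Suc.IH] by blast
  moreover have "Ck_rect L k (pd2 L (\<lambda>p. fst p ^ m *\<^sub>R \<psi> (snd p)))"
    using Ck_rect_cong[OF e2 Suc.IH[OF Ck_SucD2[OF Suc.prems]]] .
  moreover have "continuous_on (omega_cl L) (\<lambda>p. fst p ^ m *\<^sub>R \<psi> (snd p))"
    using cont by (auto intro!: continuous_intros)
  moreover have "\<forall>p\<in>omega_cl L. (\<lambda>t. t ^ m *\<^sub>R \<psi> (snd p)) differentiable (at (fst p) within {0..L})
                     \<and> (\<lambda>s. fst p ^ m *\<^sub>R \<psi> s) differentiable (at (snd p) within {0..1})"
    using d2 hvd_pow_scale differentiableI_vector by blast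
  ultimately show ?case by simp
qed




lemma hvd_const_zero:
  fixes h :: "real \<Rightarrow> 'a::euclidean_space"
  assumes "\<forall>s\<in>{0..1}. h s = c" "t \<in> {0..1}" "(h has_vector_derivative D) (at t within {0..1})"
  shows "D = 0"
proof -
  have "((\<lambda>s. c) has_vector_derivative D) (at t within {0..1})"
    by (rule has_vector_derivative_transform[OF assms(2) _ assms(3)]) (use assms(1) in auto)
  moreover have "((\<lambda>s. c) has_vector_derivative 0) (at t within {0..1})" by simp
  ultimately show ?thesis
    using vector_derivative_within_closed_interval[OF zero_less_one assms(2)] by metis
qed

definition J :: "real^3 \<Rightarrow> real^3" where
  "J x = vector [0, - (x $ 3), x $ 2]"

lemma J_nth: "J x $ 1 = 0" "J x $ 2 = - (x $ 3)" "J x $ 3 = x $ 2"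
  by (simp_all add: J_def)

lemma inner3: "(x::real^3) \<bullet> y = x$1 * y$1 + x$2 * y$2 + x$3 * y$3"
  by (simp add: inner_vec_def sum_3)

lemma bounded_linear_J: "bounded_linear J"
proof -
  have "linear J"
    by (rule linearI) (auto simp: vec_eq_iff forall_3 J_nth)
  then show ?thesis by (simp add: linear_conv_bounded_linear)
qed

lemma J_antisym: "J x \<bullet> y = - (x \<bullet> J y)"
  by (simp add: inner3 J_nth algebra_simps)

lemma J_perp: "J x \<bullet> x = 0"
  by (simp add: inner3 J_nth algebra_simps)

locale curve =
  fixes \<gamma> :: "real \<Rightarrow> real^3"
  assumes planar: "\<forall>s\<in>{0..1}. \<gamma> s $ 1 = 0"
    and smooth: "Ck_interval 6 \<gamma>"
    and arclength: "\<forall>s\<in>{0..1}. norm (tang \<gamma> s) = 1"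
begin

abbreviation "\<tau> \<equiv> tang \<gamma>"
abbreviation "\<nu> \<equiv> nrm \<gamma>"
abbreviation "\<kappa> \<equiv> curv \<gamma>"

lemma tau_def': "\<tau> = Dv \<gamma>"
  by (simp add: tang_def[abs_def])

lemma six: "(6::nat) = Suc 5" and five: "(5::nat) = Suc 4" and four: "(4::nat) = Suc 3" by simp_all

lemma tau_C5: "Ck_interval 5 \<tau>"
  unfolding tau_def' by (rule Ck_SucD2[OF smooth[unfolded six]])

lemma nu_J: "\<nu> s = J (\<tau> s)"
  by (simp add: nrm_def J_def)

lemma nu_C5: "Ck_interval 5 \<nu>"
proof -
  have "\<nu> = (\<lambda>s. J (\<tau> s))" using nu_J by auto
  then show ?thesis using Ck_linear[OF bounded_linear_J tau_C5] by simp
qed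

lemma Dtau_C4: "Ck_interval 4 (Dv \<tau>)"
  by (rule Ck_SucD2[OF tau_C5[unfolded five]])

lemma kappa_eq: "\<kappa> s = Dv \<tau> s \<bullet> \<nu> s"
  by (simp add: curv_def)

lemma kappa_C4: "Ck_interval 4 \<kappa>"
proof -
  have "\<kappa> = (\<lambda>s. Dv \<tau> s \<bullet> \<nu> s)" using kappa_eq by auto
  then show ?thesis
    using Ck_bilinear[OF bounded_bilinear_inner Dtau_C4 Ck_interval_mono[OF nu_C5[unfolded five]]]
    by simp
qed

lemma tau_hvd: "t \<in> {0..1} \<Longrightarrow> (\<tau> has_vector_derivative Dv \<tau> t) (at t within {0..1})"
  using Ck_SucD[OF tau_C5[unfolded five]] .

lemma gamma_hvd: "t \<in> {0..1} \<Longrightarrow> (\<gamma> has_vector_derivative \<tau> t) (at t within {0..1})"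
  using Ck_SucD[OF smooth[unfolded six]] by (simp add: tau_def')

lemma tau1: "t \<in> {0..1} \<Longrightarrow> \<tau> t $ 1 = 0"
  using hvd_const_zero[OF planar _ bounded_linear.has_vector_derivative[OF bounded_linear_vec_nth gamma_hvd]]
  by simp

lemma nu1: "\<nu> t $ 1 = 0"
  by (simp add: nu_J J_nth)

lemma tau_tau: "t \<in> {0..1} \<Longrightarrow> \<tau> t \<bullet> \<tau> t = 1"
  using arclength power2_norm_eq_inner[of "\<tau> t"] by simp

lemma nu_tau: "\<nu> t \<bullet> \<tau> t = 0"
  by (simp add: nu_J J_perp)

lemma Dtau_tau: "t \<in> {0..1} \<Longrightarrow> Dv \<tau> t \<bullet> \<tau> t = 0"
proof -
  assume t: "t \<in> {0..1}"
  have hv: "((\<lambda>s. \<tau> s \<bullet> \<tau> s) has_vector_derivative (\<tau> t \<bullet> Dv \<tau> t + Dv \<tau> t \<bullet> \<tau> t)) (at t within {0..1})"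
    using bounded_bilinear.has_vector_derivative[OF bounded_bilinear_inner tau_hvd[OF t] tau_hvd[OF t]] .
  have cst: "\<forall>s\<in>{0..1}. \<tau> s \<bullet> \<tau> s = 1" using tau_tau by auto
  have "\<tau> t \<bullet> Dv \<tau> t + Dv \<tau> t \<bullet> \<tau> t = 0"
    by (rule hvd_const_zero[OF cst t hv])
  then show ?thesis by (simp add: inner_commute)
qed

lemma nu_hvd: "t \<in> {0..1} \<Longrightarrow> (\<nu> has_vector_derivative J (Dv \<tau> t)) (at t within {0..1})"
proof -
  assume t: "t \<in> {0..1}"
  have "\<nu> = (\<lambda>s. J (\<tau> s))" using nu_J by auto
  then show ?thesis using bounded_linear.has_vector_derivative[OF bounded_linear_J tau_hvd[OF t]] by simp
qed

lemma Dnu_tau: "J (Dv \<tau> t) \<bullet> \<tau> t = - \<kappa> t"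
  by (simp add: J_antisym kappa_eq nu_J)

end




lemma Ck_rect_diff1:
  "Ck_rect L (Suc k) v \<Longrightarrow> p \<in> omega_cl L \<Longrightarrow> (\<lambda>t. v (t, snd p)) differentiable (at (fst p) within {0..L})"
  by simp

lemma Ck_rect_diff2:
  "Ck_rect L (Suc k) v \<Longrightarrow> p \<in> omega_cl L \<Longrightarrow> (\<lambda>s. v (fst p, s)) differentiable (at (snd p) within {0..1})"
  by simp

lemma pd1_comp:
  fixes v :: "real \<times> real \<Rightarrow> real^3"
  assumes L: "L > 0" and "Ck_rect L (Suc k) v" "p \<in> omega_cl L"
  shows "pd1 L (\<lambda>q. v q $ i) p = pd1 L v p $ i"
  by (rule pd1_eq[OF L assms(3)])
     (rule bounded_linear.has_vector_derivative[OF bounded_linear_vec_nth pd1_works[OF Ck_rect_diff1[OF assms(2,3)]]])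

lemma pd2_comp:
  fixes v :: "real \<times> real \<Rightarrow> real^3"
  assumes "Ck_rect L (Suc k) v" "p \<in> omega_cl L"
  shows "pd2 L (\<lambda>q. v q $ i) p = pd2 L v p $ i"
  by (rule pd2_eq[OF assms(2)])
     (rule bounded_linear.has_vector_derivative[OF bounded_linear_vec_nth pd2_works[OF Ck_rect_diff2[OF assms(1,2)]]])

lemma pd1_add:
  fixes v w :: "real \<times> real \<Rightarrow> 'a::euclidean_space"
  assumes L: "L > 0" and "Ck_rect L (Suc k) v" "Ck_rect L (Suc k) w" "p \<in> omega_cl L"
  shows "pd1 L (\<lambda>q. v q + w q) p = pd1 L v p + pd1 L w p"
  by (rule pd1_eq[OF L assms(4)])
     (rule has_vector_derivative_add[OF pd1_works[OF Ck_rect_diff1[OF assms(2,4)]] pd1_works[OF Ck_rect_diff1[OF assms(3,4)]]])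

lemma pd2_add:
  fixes v w :: "real \<times> real \<Rightarrow> 'a::euclidean_space"
  assumes "Ck_rect L (Suc k) v" "Ck_rect L (Suc k) w" "p \<in> omega_cl L"
  shows "pd2 L (\<lambda>q. v q + w q) p = pd2 L v p + pd2 L w p"
  by (rule pd2_eq[OF assms(3)])
     (rule has_vector_derivative_add[OF pd2_works[OF Ck_rect_diff2[OF assms(1,3)]] pd2_works[OF Ck_rect_diff2[OF assms(2,3)]]])

lemma pd2_comp5:
  fixes v :: "real \<times> real \<Rightarrow> real^3"
  shows "Ck_rect L 5 v \<Longrightarrow> p \<in> omega L \<Longrightarrow> pd2 L (\<lambda>q. v q $ i) p = pd2 L v p $ i"
  using pd2_comp[where L=L and k=4 and v=v and p=p and i=i] omega_sub
  by (metis eval_nat_numeral(3) numeral_One numeral_plus_one subsetD)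

lemma pd1_comp5:
  fixes v :: "real \<times> real \<Rightarrow> real^3"
  shows "L > 0 \<Longrightarrow> Ck_rect L 5 v \<Longrightarrow> p \<in> omega L \<Longrightarrow> pd1 L (\<lambda>q. v q $ i) p = pd1 L v p $ i"
  using pd1_comp[where L=L and k=4 and v=v and p=p and i=i] omega_sub
  by (metis eval_nat_numeral(3) numeral_One numeral_plus_one subsetD)

declare Ck_rect.simps(2)[simp del] Ck_interval.simps(2)[simp del]

locale curveL = curve +
  fixes L :: real
  assumes Lpos: "L > 0"
begin

definition good :: "(real \<times> real \<Rightarrow> real^3) \<Rightarrow> bool" where
  "good v \<longleftrightarrow> Ck_rect L 5 v \<and>
         (\<forall>p\<in>omega L.
            pd2 L (\<lambda>q. v q $ 1) p + pd1 L v p \<bullet> \<tau> (snd p) = 0 \<and>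
            pd2 L v p \<bullet> \<tau> (snd p) = 0)"

definition ach :: "(real \<times> real \<Rightarrow> real) \<Rightarrow> bool" where
  "ach H \<longleftrightarrow> (\<exists>v. good v \<and> (\<forall>p\<in>omega L. pd1 L (\<lambda>q. v q $ 1) p = H p))"

lemma five': "(5::nat) = Suc 4" by simp

lemma good_iff:
  "good v \<longleftrightarrow> Ck_rect L 5 v \<and>
         (\<forall>p\<in>omega L. pd2 L v p $ 1 + pd1 L v p \<bullet> \<tau> (snd p) = 0 \<and> pd2 L v p \<bullet> \<tau> (snd p) = 0)"
proof -
  show ?thesis
  proof (cases "Ck_rect L 5 v")
    case True
    then have "\<forall>p\<in>omega L. pd2 L (\<lambda>q. v q $ 1) p = pd2 L v p $ 1" using pd2_comp5 by blast
    then show ?thesis unfolding good_def using True by auto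
  next
    case False
    then show ?thesis unfolding good_def by blast
  qed
qed

lemma ach_iff:
  "ach H \<longleftrightarrow> (\<exists>v. good v \<and> (\<forall>p\<in>omega L. pd1 L v p $ 1 = H p))"
proof -
  have "good v \<Longrightarrow> (\<forall>p\<in>omega L. pd1 L (\<lambda>q. v q $ 1) p = H p) \<longleftrightarrow> (\<forall>p\<in>omega L. pd1 L v p $ 1 = H p)" for v
  proof -
    assume "good v"
    then have "Ck_rect L 5 v" unfolding good_def by blast
    then have "\<forall>p\<in>omega L. pd1 L (\<lambda>q. v q $ 1) p = pd1 L v p $ 1" using pd1_comp5[OF Lpos] by blast
    then show ?thesis by simp
  qed
  then show ?thesis unfolding ach_def by blast
qed

lemma ach_add:
  assumes "ach H1" "ach H2" shows "ach (\<lambda>p. H1 p + H2 p)"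
proof -
  obtain v1 where v1: "good v1" "\<forall>p\<in>omega L. pd1 L v1 p $ 1 = H1 p" using assms(1) ach_iff by blast
  obtain v2 where v2: "good v2" "\<forall>p\<in>omega L. pd1 L v2 p $ 1 = H2 p" using assms(2) ach_iff by blast
  have c1: "Ck_rect L (Suc 4) v1" and c2: "Ck_rect L (Suc 4) v2"
    using v1 v2 unfolding good_iff five' by blast+
  have e1: "pd1 L (\<lambda>q. v1 q + v2 q) p = pd1 L v1 p + pd1 L v2 p" if "p \<in> omega L" for p
    using pd1_add[OF Lpos c1 c2 subsetD[OF omega_sub that]] .
  have e2: "pd2 L (\<lambda>q. v1 q + v2 q) p = pd2 L v1 p + pd2 L v2 p" if "p \<in> omega L" for p
    using pd2_add[OF c1 c2 subsetD[OF omega_sub that]] .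
  have "good (\<lambda>q. v1 q + v2 q)"
    unfolding good_iff
  proof (intro conjI ballI)
    show "Ck_rect L 5 (\<lambda>q. v1 q + v2 q)"
      using Ck_rect_add[OF Lpos] v1 v2 unfolding good_iff by blast
  next
    fix p assume p: "p \<in> omega L"
    show "pd2 L (\<lambda>q. v1 q + v2 q) p $ 1 + pd1 L (\<lambda>q. v1 q + v2 q) p \<bullet> \<tau> (snd p) = 0"
      using v1(1) v2(1) p by (auto simp: e1 e2 good_iff inner_add_left algebra_simps)
    show "pd2 L (\<lambda>q. v1 q + v2 q) p \<bullet> \<tau> (snd p) = 0"
      using v1(1) v2(1) p by (auto simp: e1 e2 good_iff inner_add_left)
  qed
  moreover have "\<forall>p\<in>omega L. pd1 L (\<lambda>q. v1 q + v2 q) p $ 1 = H1 p + H2 p"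
    using v1 v2 e1 by auto
  ultimately show ?thesis unfolding ach_iff by blast
qed

end




definition e1 :: "real^3" where "e1 = vector [1, 0, 0]"

lemma e1_nth: "e1 $ 1 = 1" by (simp add: e1_def)

context curve
begin

lemma e1_tau: "t \<in> {0..1} \<Longrightarrow> e1 \<bullet> \<tau> t = 0"
  by (simp add: inner3 e1_def tau1)

lemma Dtau1: "t \<in> {0..1} \<Longrightarrow> Dv \<tau> t $ 1 = 0"
proof -
  assume t: "t \<in> {0..1}"
  have "\<forall>s\<in>{0..1}. \<tau> s $ 1 = 0" using tau1 by auto
  from hvd_const_zero[OF this t bounded_linear.has_vector_derivative[OF bounded_linear_vec_nth tau_hvd[OF t]]]
  show ?thesis .
qed

end

context curveL
begin

lemma ach_mono1: "ach (\<lambda>p. c * fst p ^ i)"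
proof -
  define w where "w = (c / real (Suc i)) *\<^sub>R e1"
  define v where "v = (\<lambda>p::real\<times>real. fst p ^ Suc i *\<^sub>R w)"
  have Ck: "Ck_rect L 5 v"
    using Ck_rect_prod[OF Lpos Ck_const[of 5 w], of "Suc i"] by (simp add: v_def)
  have p1: "pd1 L v p = (real (Suc i) * fst p ^ i) *\<^sub>R w" if "p \<in> omega L" for p
    by (rule pd1_eq[OF Lpos subsetD[OF omega_sub that]]) (use hvd_pow_scale[of "Suc i" w "fst p"] in \<open>simp add: v_def\<close>)
  have p2: "pd2 L v p = 0" if "p \<in> omega L" for p
    by (rule pd2_eq[OF subsetD[OF omega_sub that]]) (simp add: v_def)
  have sp: "snd p \<in> {0..1}" if "p \<in> omega L" for p
    using that by (auto simp: omega_def)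
  have "good v"
    unfolding good_iff using Ck p1 p2 sp by (auto simp: w_def e1_tau)
  moreover have "\<forall>p\<in>omega L. pd1 L v p $ 1 = c * fst p ^ i"
    using p1 by (auto simp: w_def e1_nth)
  ultimately show ?thesis unfolding ach_iff by blast
qed


definition Af :: "real \<Rightarrow> (real \<Rightarrow> real) \<Rightarrow> real \<Rightarrow> real" where
  "Af \<alpha> \<beta> s = \<alpha> + integral {0..s} (\<lambda>r. \<beta> r * \<kappa> r)"

definition Qf :: "real \<Rightarrow> (real \<Rightarrow> real) \<Rightarrow> real \<Rightarrow> real" where
  "Qf \<alpha> \<beta> s = integral {0..s} (Af \<alpha> \<beta>)"

definition Psi :: "real \<Rightarrow> (real \<Rightarrow> real) \<Rightarrow> real \<Rightarrow> real^3" where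
  "Psi \<alpha> \<beta> s = Af \<alpha> \<beta> s *\<^sub>R \<tau> s + \<beta> s *\<^sub>R \<nu> s"

lemma bk_C4: "real_polynomial_function \<beta> \<Longrightarrow> Ck_interval 4 (\<lambda>r. \<beta> r * \<kappa> r)"
  by (rule Ck_bilinear[OF bounded_bilinear_mult Ck_poly kappa_C4])

lemma Af_C5: "real_polynomial_function \<beta> \<Longrightarrow> Ck_interval 5 (Af \<alpha> \<beta>)"
proof -
  assume b: "real_polynomial_function \<beta>"
  have "Ck_interval (Suc 4) (\<lambda>s. integral {0..s} (\<lambda>r. \<beta> r * \<kappa> r))"
    by (rule Ck_integral[OF bk_C4[OF b]])
  then have "Ck_interval 5 (\<lambda>s. integral {0..s} (\<lambda>r. \<beta> r * \<kappa> r))"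
    unfolding five .
  then have "Ck_interval 5 (\<lambda>s. \<alpha> + integral {0..s} (\<lambda>r. \<beta> r * \<kappa> r))"
    by (rule Ck_add[OF Ck_const])
  then show ?thesis by (simp add: Af_def[abs_def])
qed

lemma Qf_C5: "real_polynomial_function \<beta> \<Longrightarrow> Ck_interval 5 (Qf \<alpha> \<beta>)"
proof -
  assume b: "real_polynomial_function \<beta>"
  have "Ck_interval (Suc 5) (\<lambda>s. integral {0..s} (Af \<alpha> \<beta>))"
    by (rule Ck_integral[OF Af_C5[OF b]])
  then show ?thesis unfolding Qf_def[abs_def] by (rule Ck_interval_mono)
qed

lemma Psi_C5: "real_polynomial_function \<beta> \<Longrightarrow> Ck_interval 5 (Psi \<alpha> \<beta>)"
proof -
  assume b: "real_polynomial_function \<beta>"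
  have "Ck_interval 5 (\<lambda>s. Af \<alpha> \<beta> s *\<^sub>R \<tau> s + \<beta> s *\<^sub>R \<nu> s)"
    by (intro Ck_add Ck_bilinear[OF bounded_bilinear_scaleR] Af_C5 b tau_C5 nu_C5 Ck_poly)
  then show ?thesis by (simp add: Psi_def[abs_def])
qed

lemma Af_hvd: "real_polynomial_function \<beta> \<Longrightarrow> s \<in> {0..1} \<Longrightarrow>
    (Af \<alpha> \<beta> has_vector_derivative \<beta> s * \<kappa> s) (at s within {0..1})"
proof -
  assume b: "real_polynomial_function \<beta>" and s: "s \<in> {0..1}"
  have "((\<lambda>s. integral {0..s} (\<lambda>r. \<beta> r * \<kappa> r)) has_vector_derivative \<beta> s * \<kappa> s) (at s within {0..1})"
    by (rule integral_has_vector_derivative[OF Ck_interval_cont[OF bk_C4[OF b]] s])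
  then have "((\<lambda>s. \<alpha> + integral {0..s} (\<lambda>r. \<beta> r * \<kappa> r)) has_vector_derivative 0 + \<beta> s * \<kappa> s) (at s within {0..1})"
    by (intro has_vector_derivative_add) auto
  then show ?thesis by (simp add: Af_def[abs_def])
qed

lemma Qf_hvd: "real_polynomial_function \<beta> \<Longrightarrow> s \<in> {0..1} \<Longrightarrow>
    (Qf \<alpha> \<beta> has_vector_derivative Af \<alpha> \<beta> s) (at s within {0..1})"
  unfolding Qf_def[abs_def]
  by (rule integral_has_vector_derivative[OF Ck_interval_cont[OF Af_C5]])

lemma Psi_hvd:
  assumes b: "real_polynomial_function \<beta>" and s: "s \<in> {0..1}"
    and b': "\<And>x. (\<beta> has_real_derivative \<beta>' x) (at x)"
  shows "(Psi \<alpha> \<beta> has_vector_derivative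
      (Af \<alpha> \<beta> s *\<^sub>R Dv \<tau> s + (\<beta> s * \<kappa> s) *\<^sub>R \<tau> s) + (\<beta> s *\<^sub>R J (Dv \<tau> s) + \<beta>' s *\<^sub>R \<nu> s)) (at s within {0..1})"
proof -
  have 1: "(Af \<alpha> \<beta> has_field_derivative \<beta> s * \<kappa> s) (at s within {0..1})"
    using Af_hvd[OF b s] by (simp add: has_real_derivative_iff_has_vector_derivative)
  have 2: "(\<beta> has_field_derivative \<beta>' s) (at s within {0..1})"
    using b' has_field_derivative_at_within by blast
  have "((\<lambda>s. Af \<alpha> \<beta> s *\<^sub>R \<tau> s + \<beta> s *\<^sub>R \<nu> s) has_vector_derivative
      (Af \<alpha> \<beta> s *\<^sub>R Dv \<tau> s + (\<beta> s * \<kappa> s) *\<^sub>R \<tau> s) + (\<beta> s *\<^sub>R J (Dv \<tau> s) + \<beta>' s *\<^sub>R \<nu> s)) (at s within {0..1})"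
    by (intro has_vector_derivative_add has_vector_derivative_scaleR 1 2 tau_hvd nu_hvd s)
  then show ?thesis by (simp add: Psi_def[abs_def])
qed

lemma Psi1: "s \<in> {0..1} \<Longrightarrow> Psi \<alpha> \<beta> s $ 1 = 0"
  by (simp add: Psi_def tau1 nu1)

lemma Psi_tau: "s \<in> {0..1} \<Longrightarrow> Psi \<alpha> \<beta> s \<bullet> \<tau> s = Af \<alpha> \<beta> s"
  by (simp add: Psi_def inner_add_left tau_tau nu_tau)

lemma dPsi1: "s \<in> {0..1} \<Longrightarrow>
   ((Af \<alpha> \<beta> s *\<^sub>R Dv \<tau> s + (\<beta> s * \<kappa> s) *\<^sub>R \<tau> s) + (\<beta> s *\<^sub>R J (Dv \<tau> s) + \<beta>' s *\<^sub>R \<nu> s)) $ 1 = 0"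
  by (simp add: Dtau1 tau1 nu1 J_nth)

lemma dPsi_tau: "s \<in> {0..1} \<Longrightarrow>
   ((Af \<alpha> \<beta> s *\<^sub>R Dv \<tau> s + (\<beta> s * \<kappa> s) *\<^sub>R \<tau> s) + (\<beta> s *\<^sub>R J (Dv \<tau> s) + \<beta>' s *\<^sub>R \<nu> s)) \<bullet> \<tau> s = 0"
  by (simp add: inner_add_left Dtau_tau tau_tau nu_tau Dnu_tau)

end

context curveL
begin

lemma ach_mono2:
  assumes b: "real_polynomial_function \<beta>"
  shows "ach (\<lambda>p. - (fst p ^ i * Qf \<alpha> \<beta> (snd p)))"
proof -
  obtain \<beta>' where b': "\<And>x. (\<beta> has_real_derivative \<beta>' x) (at x)"
    using has_real_derivative_polynomial_function[OF b] by blast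
  define a where "a = 1 / real (Suc i)"
  define bb where "bb = 1 / (real (Suc i) * real (Suc (Suc i)))"
  define \<psi>1 where "\<psi>1 = (\<lambda>s. Qf \<alpha> \<beta> s *\<^sub>R ((- a) *\<^sub>R e1))"
  define \<psi>2 where "\<psi>2 = (\<lambda>s. bb *\<^sub>R Psi \<alpha> \<beta> s)"
  define dP where "dP = (\<lambda>s. (Af \<alpha> \<beta> s *\<^sub>R Dv \<tau> s + (\<beta> s * \<kappa> s) *\<^sub>R \<tau> s) + (\<beta> s *\<^sub>R J (Dv \<tau> s) + \<beta>' s *\<^sub>R \<nu> s))"
  define v where "v = (\<lambda>p::real\<times>real. fst p ^ Suc i *\<^sub>R \<psi>1 (snd p) + fst p ^ Suc (Suc i) *\<^sub>R \<psi>2 (snd p))"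
  have C1: "Ck_interval 5 \<psi>1"
    unfolding \<psi>1_def by (rule Ck_linear[OF bounded_linear_scaleR_left Qf_C5[OF b]])
  have C2: "Ck_interval 5 \<psi>2"
    unfolding \<psi>2_def by (rule Ck_linear[OF bounded_linear_scaleR_right Psi_C5[OF b]])
  have Ck: "Ck_rect L 5 v"
    unfolding v_def by (intro Ck_rect_add[OF Lpos] Ck_rect_prod[OF Lpos] C1 C2)
  have sp: "snd p \<in> {0..1}" if "p \<in> omega L" for p
    using that by (auto simp: omega_def)
  have p1: "pd1 L v p = (real (Suc i) * fst p ^ i) *\<^sub>R \<psi>1 (snd p) + (real (Suc (Suc i)) * fst p ^ Suc i) *\<^sub>R \<psi>2 (snd p)"
    if "p \<in> omega L" for p
    by (rule pd1_eq[OF Lpos subsetD[OF omega_sub that]])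
       (use has_vector_derivative_add[OF hvd_pow_scale[of "Suc i" "\<psi>1 (snd p)" "fst p"] hvd_pow_scale[of "Suc (Suc i)" "\<psi>2 (snd p)" "fst p"]]
        in \<open>simp add: v_def\<close>)
  have p2: "pd2 L v p = fst p ^ Suc i *\<^sub>R (Af \<alpha> \<beta> (snd p) *\<^sub>R ((- a) *\<^sub>R e1)) + fst p ^ Suc (Suc i) *\<^sub>R (bb *\<^sub>R dP (snd p))"
    if "p \<in> omega L" for p
  proof (rule pd2_eq[OF subsetD[OF omega_sub that]])
    have h1: "(\<psi>1 has_vector_derivative Af \<alpha> \<beta> (snd p) *\<^sub>R ((- a) *\<^sub>R e1)) (at (snd p) within {0..1})"
      unfolding \<psi>1_def by (rule bounded_linear.has_vector_derivative[OF bounded_linear_scaleR_left Qf_hvd[OF b sp[OF that]]])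
    have h2: "(\<psi>2 has_vector_derivative bb *\<^sub>R dP (snd p)) (at (snd p) within {0..1})"
      unfolding \<psi>2_def dP_def by (rule bounded_linear.has_vector_derivative[OF bounded_linear_scaleR_right Psi_hvd[OF b sp[OF that] b']])
    show "((\<lambda>s. v (fst p, s)) has_vector_derivative fst p ^ Suc i *\<^sub>R (Af \<alpha> \<beta> (snd p) *\<^sub>R ((- a) *\<^sub>R e1)) + fst p ^ Suc (Suc i) *\<^sub>R (bb *\<^sub>R dP (snd p)))
       (at (snd p) within {0..1})"
      unfolding v_def fst_conv snd_conv
      by (intro has_vector_derivative_add bounded_linear.has_vector_derivative[OF bounded_linear_scaleR_right] h1 h2)
  qed
  have ab: "real (Suc (Suc i)) * bb = a"
    by (simp add: a_def bb_def)
  have "good v"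
    unfolding good_iff
  proof (intro conjI ballI Ck)
    fix p assume p: "p \<in> omega L"
    have s: "snd p \<in> {0..1}" by (rule sp[OF p])
    have "pd2 L v p $ 1 = - (a * fst p ^ Suc i * Af \<alpha> \<beta> (snd p))"
      using dPsi1[OF s, of \<alpha> \<beta> \<beta>'] by (simp add: p2[OF p] e1_nth dP_def)
    moreover have "pd1 L v p \<bullet> \<tau> (snd p) = real (Suc (Suc i)) * bb * fst p ^ Suc i * Af \<alpha> \<beta> (snd p)"
      by (simp add: p1[OF p] \<psi>1_def \<psi>2_def inner_add_left inner_diff_left e1_tau[OF s] Psi_tau[OF s])
    moreover have ab': "(2 + real i) * bb = a" using ab by simp
    ultimately show "pd2 L v p $ 1 + pd1 L v p \<bullet> \<tau> (snd p) = 0"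
      by (simp add: ab')
    show "pd2 L v p \<bullet> \<tau> (snd p) = 0"
    proof -
      have "dP (snd p) \<bullet> \<tau> (snd p) = 0" using dPsi_tau[OF s, of \<alpha> \<beta> \<beta>'] by (simp only: dP_def)
      then show ?thesis by (simp add: p2[OF p] inner_add_left inner_diff_left e1_tau[OF s])
    qed
  qed
  moreover have "\<forall>p\<in>omega L. pd1 L v p $ 1 = - (fst p ^ i * Qf \<alpha> \<beta> (snd p))"
  proof
    fix p assume p: "p \<in> omega L"
    show "pd1 L v p $ 1 = - (fst p ^ i * Qf \<alpha> \<beta> (snd p))"
      using Psi1[OF sp[OF p], of \<alpha> \<beta>] by (simp add: p1[OF p] \<psi>1_def \<psi>2_def e1_nth a_def)
  qed
  ultimately show ?thesis unfolding ach_iff by blast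
qed

end




lemma ftc01:
  fixes G :: "real \<Rightarrow> real"
  assumes "\<forall>x\<in>{0..1}. (G has_vector_derivative d x) (at x within {0..1})" "t \<in> {0..1}"
  shows "G t - G 0 = integral {0..t} d"
proof -
  have "(d has_integral (G t - G 0)) {0..t}"
  proof (rule fundamental_theorem_of_calculus)
    show "0 \<le> t" using assms by simp
    fix x assume x: "x \<in> {0..t}"
    then have "x \<in> {0..1}" using assms by auto
    then show "(G has_vector_derivative d x) (at x within {0..t})"
      using has_vector_derivative_within_subset[OF bspec[OF assms(1)], of x "{0..t}"] assms by auto
  qed
  then show ?thesis by (simp add: integral_unique)
qed

context curveL
begin

lemma Q_err:
  fixes F G d :: "real \<Rightarrow> real"
  assumes b: "real_polynomial_function \<beta>" and d: "continuous_on {0..1} d"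
    and G: "\<forall>x\<in>{0..1}. (G has_vector_derivative d x) (at x within {0..1})" "G 0 = 0"
    and F: "\<forall>x\<in>{0..1}. (F has_vector_derivative G x) (at x within {0..1})" "F 0 = 0"
    and s: "s \<in> {0..1}"
  shows "\<bar>Qf 0 \<beta> s - F s\<bar> \<le> integral {0..1} (\<lambda>r. \<bar>\<beta> r * \<kappa> r - d r\<bar>)"
proof -
  define I where "I = integral {0..1} (\<lambda>r. \<bar>\<beta> r * \<kappa> r - d r\<bar>)"
  have cbk: "continuous_on {0..1} (\<lambda>r. \<beta> r * \<kappa> r)" by (rule Ck_interval_cont[OF bk_C4[OF b]])
  have cG: "continuous_on {0..1} G" using G(1) by (intro continuous_on_vector_derivative) auto
  have ca: "continuous_on {0..1} (\<lambda>r. \<bar>\<beta> r * \<kappa> r - d r\<bar>)"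
    using cbk d by (intro continuous_on_rabs continuous_on_diff)
  have cA: "continuous_on {0..1} (Af 0 \<beta>)" by (rule Ck_interval_cont[OF Af_C5[OF b]])
  have AG: "\<bar>Af 0 \<beta> t - G t\<bar> \<le> I" if t: "t \<in> {0..1}" for t
  proof -
    have sub: "{0..t} \<subseteq> {0..1}" using t by auto
    have i1: "(\<lambda>r. \<beta> r * \<kappa> r) integrable_on {0..t}"
      by (rule integrable_continuous_real, rule continuous_on_subset[OF cbk sub])
    have i2: "d integrable_on {0..t}"
      by (rule integrable_continuous_real, rule continuous_on_subset[OF d sub])
    have "Af 0 \<beta> t - G t = integral {0..t} (\<lambda>r. \<beta> r * \<kappa> r) - integral {0..t} d"
      using ftc01[OF G(1) t] G(2) by (simp add: Af_def)
    also have "\<dots> = integral {0..t} (\<lambda>r. \<beta> r * \<kappa> r - d r)"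
      by (rule integral_diff[OF i1 i2, symmetric])
    finally have eq: "Af 0 \<beta> t - G t = integral {0..t} (\<lambda>r. \<beta> r * \<kappa> r - d r)" .
    have "\<bar>integral {0..t} (\<lambda>r. \<beta> r * \<kappa> r - d r)\<bar> \<le> integral {0..t} (\<lambda>r. \<bar>\<beta> r * \<kappa> r - d r\<bar>)"
      using integral_norm_bound_integral[of "\<lambda>r. \<beta> r * \<kappa> r - d r" "{0..t}" "\<lambda>r. \<bar>\<beta> r * \<kappa> r - d r\<bar>"]
        integrable_continuous_real[OF continuous_on_subset[OF ca sub]] integrable_diff[OF i1 i2] by auto
    also have "\<dots> \<le> I" unfolding I_def
      by (rule integral_subset_le[OF sub integrable_continuous_real[OF continuous_on_subset[OF ca sub]]
               integrable_continuous_real[OF ca]]) auto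
    finally show ?thesis using eq by simp
  qed
  have sub: "{0..s} \<subseteq> {0..1}" using s by auto
  have "F s = integral {0..s} G" using ftc01[OF F(1) s] F(2) by simp
  then have "Qf 0 \<beta> s - F s = integral {0..s} (Af 0 \<beta>) - integral {0..s} G" by (simp add: Qf_def)
  also have "\<dots> = integral {0..s} (\<lambda>r. Af 0 \<beta> r - G r)"
    by (rule integral_diff[symmetric]; rule integrable_continuous_real; rule continuous_on_subset[OF _ sub]) (use cA cG in auto)
  finally have "\<bar>Qf 0 \<beta> s - F s\<bar> = norm (integral {0..s} (\<lambda>r. Af 0 \<beta> r - G r))" by simp
  also have "\<dots> \<le> I * (s - 0)"
    by (rule integral_bound) (use s cA cG sub AG in \<open>auto intro!: continuous_intros intro: continuous_on_subset\<close>)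
  also have "\<dots> \<le> I"
  proof -
    have "0 \<le> I" unfolding I_def
      by (rule integral_nonneg) (use ca in \<open>auto intro!: integrable_continuous_real\<close>)
    then show ?thesis using s by (auto intro: mult_left_le)
  qed
  finally show ?thesis unfolding I_def .
qed

end


locale curveLZ = curveL +
  assumes finite_zeros: "finite {s\<in>{0..1}. \<kappa> s = 0}"
begin

lemma kappa_cont: "continuous_on {0..1} \<kappa>"
  by (rule Ck_interval_cont[OF kappa_C4])

lemma kappa_bound: "\<exists>K>0. \<forall>s\<in>{0..1}. \<bar>\<kappa> s\<bar> \<le> K"
proof -
  have "bounded (\<kappa> ` {0..1})"
    by (rule compact_imp_bounded, rule compact_continuous_image[OF kappa_cont compact_Icc])
  then show ?thesis unfolding bounded_pos by auto
qed

lemma fn_tendsto: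
  assumes "\<kappa> s \<noteq> 0"
  shows "(\<lambda>n. \<bar>d\<bar> * (inverse (real (Suc n)) / ((\<kappa> s)\<^sup>2 + inverse (real (Suc n))))) \<longlonglongrightarrow> 0"
proof -
  have "(\<lambda>n. \<bar>d\<bar> * (inverse (real (Suc n)) / ((\<kappa> s)\<^sup>2 + inverse (real (Suc n))))) \<longlonglongrightarrow> \<bar>d\<bar> * (0 / ((\<kappa> s)\<^sup>2 + 0))"
    using assms by (intro tendsto_intros LIMSEQ_inverse_real_of_nat) auto
  then show ?thesis by simp
qed

lemma L1_approx:
  assumes d: "continuous_on {0..1} d" and e: "e > 0"
  shows "\<exists>\<beta>. real_polynomial_function \<beta> \<and> integral {0..1} (\<lambda>r. \<bar>\<beta> r * \<kappa> r - d r\<bar>) < e"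
proof -
  obtain K where K: "K > 0" "\<forall>s\<in>{0..1}. \<bar>\<kappa> s\<bar> \<le> K" using kappa_bound by blast
  define Z where "Z = {s\<in>{0..1}. \<kappa> s = 0}"
  have negZ: "negligible Z" using finite_zeros unfolding Z_def by (rule negligible_finite)
  define \<delta> where "\<delta> = (\<lambda>n::nat. inverse (real (Suc n)))"
  have dpos: "\<delta> n > 0" for n by (simp add: \<delta>_def)
  have dp: "(\<kappa> x)\<^sup>2 + \<delta> n \<noteq> 0" for x n using add_nonneg_pos[OF zero_le_power2 dpos[of n], of "\<kappa> x"] by simp
  define f where "f = (\<lambda>n s. \<bar>d s\<bar> * (\<delta> n / ((\<kappa> s)\<^sup>2 + \<delta> n)))"
  define g where "g = (\<lambda>n s. if \<kappa> s = 0 then 0 else f n s)"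
  have fcont: "continuous_on {0..1} (f n)" for n
    unfolding f_def using dpos[of n] d kappa_cont
    by (intro continuous_intros) (auto simp: dp)
  have fint: "f n integrable_on {0..1}" for n by (rule integrable_continuous_real[OF fcont])
  have gint: "g n integrable_on {0..1}" for n
    by (rule integrable_spike[OF fint negZ]) (auto simp: g_def Z_def)
  have fle: "\<bar>f n s\<bar> \<le> \<bar>d s\<bar>" for n s
  proof -
    have "\<delta> n / ((\<kappa> s)\<^sup>2 + \<delta> n) \<le> 1" using dpos[of n] by (simp add: add_nonneg_pos)
    moreover have "0 \<le> \<delta> n / ((\<kappa> s)\<^sup>2 + \<delta> n)" using dpos[of n] by (simp add: add_nonneg_pos)
    ultimately have "\<bar>d s\<bar> * (\<delta> n / ((\<kappa> s)\<^sup>2 + \<delta> n)) \<le> \<bar>d s\<bar>"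
      using mult_left_le[of "\<delta> n / ((\<kappa> s)\<^sup>2 + \<delta> n)" "\<bar>d s\<bar>"] by linarith
    moreover have "0 \<le> \<bar>d s\<bar> * (\<delta> n / ((\<kappa> s)\<^sup>2 + \<delta> n))" using \<open>0 \<le> \<delta> n / ((\<kappa> s)\<^sup>2 + \<delta> n)\<close> by (rule mult_nonneg_nonneg[OF abs_ge_zero])
    ultimately show ?thesis unfolding f_def by linarith
  qed
  have gle: "norm (g n s) \<le> \<bar>d s\<bar>" for n s using fle[of n s] by (simp add: g_def)
  have gconv: "(\<lambda>n. g n s) \<longlonglongrightarrow> 0" for s
  proof (cases "\<kappa> s = 0")
    case True then show ?thesis by (simp add: g_def)
  next
    case False then show ?thesis using fn_tendsto[OF False, of "d s"] by (simp add: g_def f_def \<delta>_def)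
  qed
  have dint: "(\<lambda>s. \<bar>d s\<bar>) integrable_on {0..1}"
    using d by (intro integrable_continuous_real continuous_intros)
  note lim = dominated_convergence(2)[of g "{0..1}" "\<lambda>s. \<bar>d s\<bar>" "\<lambda>_. 0", OF gint dint gle gconv]
  from lim have "(\<lambda>n. integral {0..1} (g n)) \<longlonglongrightarrow> 0" by simp
  then obtain n where n: "integral {0..1} (g n) < e / 2"
    using e by (metis half_gt_zero order_tendstoD(2) eventually_sequentially order_refl)
  have fg: "integral {0..1} (f n) = integral {0..1} (g n)"
    by (rule integral_spike[OF negZ]) (auto simp: g_def Z_def)
  define h where "h = (\<lambda>s. d s * \<kappa> s / ((\<kappa> s)\<^sup>2 + \<delta> n))"
  have hcont: "continuous_on {0..1} h"
    unfolding h_def using dpos[of n] d kappa_cont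
    by (intro continuous_intros) (auto simp: dp)
  define eps where "eps = e / (2 * (K + 1))"
  have eps: "eps > 0" using e K by (simp add: eps_def)
  obtain \<beta> where b: "real_polynomial_function \<beta>" "\<And>x. x \<in> {0..1} \<Longrightarrow> \<bar>h x - \<beta> x\<bar> < eps"
    using Stone_Weierstrass_real_polynomial_function[OF compact_Icc hcont eps] by blast
  have bcont: "continuous_on {0..1} \<beta>"
    using b(1) by (simp add: continuous_on_polymonial_function real_polynomial_function_eq)
  have pw: "\<bar>\<beta> s * \<kappa> s - d s\<bar> \<le> K * eps + f n s" if s: "s \<in> {0..1}" for s
  proof -
    have den: "(\<kappa> s)\<^sup>2 + \<delta> n > 0" using dpos[of n] by (simp add: add_nonneg_pos)
    have "h s * \<kappa> s - d s = - (d s * (\<delta> n / ((\<kappa> s)\<^sup>2 + \<delta> n)))"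
      unfolding h_def using den by (simp add: field_simps power2_eq_square)
    then have 1: "\<bar>h s * \<kappa> s - d s\<bar> = f n s"
      unfolding f_def using dpos[of n] den by (simp add: abs_mult)
    have "\<bar>\<beta> s * \<kappa> s - h s * \<kappa> s\<bar> = \<bar>\<kappa> s\<bar> * \<bar>h s - \<beta> s\<bar>"
      by (simp add: abs_mult[symmetric] algebra_simps abs_minus_commute)
    also have "\<dots> \<le> K * eps"
      using K(2) s b(2)[OF s] by (intro mult_mono) auto
    finally have 2: "\<bar>\<beta> s * \<kappa> s - h s * \<kappa> s\<bar> \<le> K * eps" .
    have "\<bar>\<beta> s * \<kappa> s - d s\<bar> \<le> \<bar>\<beta> s * \<kappa> s - h s * \<kappa> s\<bar> + \<bar>h s * \<kappa> s - d s\<bar>" by linarith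
    then show ?thesis using 1 2 by linarith
  qed
  have ci: "(\<lambda>_. K * eps) integrable_on {0..1::real}" by (rule integrable_continuous_real) simp
  have "integral {0..1} (\<lambda>r. \<bar>\<beta> r * \<kappa> r - d r\<bar>) \<le> integral {0..1} (\<lambda>r. K * eps + f n r)"
    by (rule integral_le) (use bcont kappa_cont d fcont pw in \<open>auto intro!: integrable_continuous_real continuous_intros\<close>)
  also have "\<dots> = K * eps + integral {0..1} (f n)"
    using integral_add[of "\<lambda>_. K * eps" "{0..1}" "f n"] fint ci by simp
  also have "\<dots> < e / 2 + e / 2"
  proof -
    have "K * eps < e / 2" using K e by (simp add: eps_def field_simps)
    then show ?thesis using n fg by linarith
  qed
  finally show ?thesis using b(1) by auto
qed

end




context curveL
begin

definition U :: "(real \<times> real \<Rightarrow> real) \<Rightarrow> bool" where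
  "U H \<longleftrightarrow> (\<forall>\<eta>>0. \<exists>H'. ach H' \<and> (\<forall>p\<in>omega L. \<bar>H p - H' p\<bar> < \<eta>))"

lemma U_ach: "ach H \<Longrightarrow> U H"
  unfolding U_def by (metis abs_zero diff_self)

lemma U_eq: assumes "ach H'" "\<forall>p\<in>omega L. H' p = H p" shows "U H"
  unfolding U_def
proof (intro allI impI exI conjI)
  fix \<eta> :: real assume "\<eta> > 0"
  show "ach H'" by fact
  show "\<forall>p\<in>omega L. \<bar>H p - H' p\<bar> < \<eta>" using assms(2) \<open>\<eta> > 0\<close> by simp
qed

lemma U_add: assumes "U H1" "U H2" shows "U (\<lambda>p. H1 p + H2 p)"
  unfolding U_def
proof (intro allI impI)
  fix \<eta> :: real assume e: "\<eta> > 0"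
  obtain H1' where 1: "ach H1'" "\<forall>p\<in>omega L. \<bar>H1 p - H1' p\<bar> < \<eta>/2"
    using assms(1) e unfolding U_def by (meson half_gt_zero)
  obtain H2' where 2: "ach H2'" "\<forall>p\<in>omega L. \<bar>H2 p - H2' p\<bar> < \<eta>/2"
    using assms(2) e unfolding U_def by (meson half_gt_zero)
  have "ach (\<lambda>p. H1' p + H2' p)" by (rule ach_add[OF 1(1) 2(1)])
  moreover have "\<forall>p\<in>omega L. \<bar>H1 p + H2 p - (H1' p + H2' p)\<bar> < \<eta>"
    using 1(2) 2(2) by (smt (verit, best) field_sum_of_halves)
  ultimately show "\<exists>H'. ach H' \<and> (\<forall>p\<in>omega L. \<bar>H1 p + H2 p - H' p\<bar> < \<eta>)" by blast
qed

lemma Af_zero: "Af \<alpha> (\<lambda>_. 0) s = \<alpha>"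
  by (simp add: Af_def)

lemma Qf_lin: "s \<ge> 0 \<Longrightarrow> Qf \<alpha> (\<lambda>_. 0) s = \<alpha> * s"
  by (simp add: Qf_def Af_zero[abs_def])

end

context curveLZ
begin

lemma U_mono: "U (\<lambda>p. c * fst p ^ i * snd p ^ j)"
proof (cases j)
  case 0
  then show ?thesis using U_ach[OF ach_mono1[of c i]] by simp
next
  case (Suc j')
  note j = Suc
  show ?thesis
  proof (cases j')
    case 0
    have "ach (\<lambda>p. - (fst p ^ i * Qf (-c) (\<lambda>_. 0) (snd p)))"
      by (rule ach_mono2) auto
    moreover have "\<forall>p\<in>omega L. - (fst p ^ i * Qf (-c) (\<lambda>_. 0) (snd p)) = c * fst p ^ i * snd p ^ j"
      using j 0 by (auto simp: omega_def Qf_lin)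
    ultimately show ?thesis by (rule U_eq)
  next
    case (Suc m)
    have jm: "j = Suc (Suc m)" using j Suc by simp
    define F where "F = (\<lambda>s::real. - c * s ^ Suc (Suc m))"
    define G where "G = (\<lambda>s::real. - c * (real (Suc (Suc m)) * s ^ Suc m))"
    define d where "d = (\<lambda>s::real. - c * (real (Suc (Suc m)) * (real (Suc m) * s ^ m)))"
    have dF: "(F has_vector_derivative G x) (at x within {0..1})" for x
      unfolding F_def G_def has_real_derivative_iff_has_vector_derivative[symmetric]
      by (rule derivative_eq_intros DERIV_pow refl | simp)+
    have dG: "(G has_vector_derivative d x) (at x within {0..1})" for x
      unfolding G_def d_def has_real_derivative_iff_has_vector_derivative[symmetric]
      by (rule derivative_eq_intros DERIV_pow refl | simp)+
    have dc: "continuous_on {0..1} d" unfolding d_def by (intro continuous_intros)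
    show ?thesis unfolding U_def
    proof (intro allI impI)
      fix \<eta> :: real assume e: "\<eta> > 0"
      define e' where "e' = \<eta> / (L ^ i + 1)"
      have Li: "0 \<le> L ^ i" using Lpos by simp
      have e': "e' > 0" using e Li by (simp add: e'_def)
      obtain \<beta> where b: "real_polynomial_function \<beta>" "integral {0..1} (\<lambda>r. \<bar>\<beta> r * \<kappa> r - d r\<bar>) < e'"
        using L1_approx[OF dc e'] by blast
      have err: "\<bar>Qf 0 \<beta> s - F s\<bar> < e'" if "s \<in> {0..1}" for s
        using Q_err[OF b(1) dc _ _ _ _ that, of G F] dF dG b(2) by (simp add: F_def G_def)
      have "ach (\<lambda>p. - (fst p ^ i * Qf 0 \<beta> (snd p)))" by (rule ach_mono2[OF b(1)])
      moreover have "\<bar>c * fst p ^ i * snd p ^ j - - (fst p ^ i * Qf 0 \<beta> (snd p))\<bar> < \<eta>"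
        if p: "p \<in> omega L" for p
      proof -
        have x: "0 < fst p" "fst p < L" and s: "snd p \<in> {0..1}" using p by (auto simp: omega_def)
        have "c * fst p ^ i * snd p ^ j - - (fst p ^ i * Qf 0 \<beta> (snd p)) = fst p ^ i * (Qf 0 \<beta> (snd p) - F (snd p))"
          by (simp add: F_def jm algebra_simps)
        then have "\<bar>c * fst p ^ i * snd p ^ j - - (fst p ^ i * Qf 0 \<beta> (snd p))\<bar> = fst p ^ i * \<bar>Qf 0 \<beta> (snd p) - F (snd p)\<bar>"
          using x by (simp add: abs_mult)
        also have "\<dots> \<le> L ^ i * e'"
          using x err[OF s] by (intro mult_mono power_mono) auto
        also have "\<dots> < \<eta>"
          using e Li by (simp add: e'_def field_simps)
        finally show ?thesis .
      qed
      ultimately show "\<exists>H'. ach H' \<and> (\<forall>p\<in>omega L. \<bar>c * fst p ^ i * snd p ^ j - H' p\<bar> < \<eta>)" by blast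
    qed
  qed
qed

end




inductive Poly :: "(real \<times> real \<Rightarrow> real) \<Rightarrow> bool" where
  mono: "Poly (\<lambda>p. c * fst p ^ i * snd p ^ j)"
| add: "Poly f \<Longrightarrow> Poly g \<Longrightarrow> Poly (\<lambda>p. f p + g p)"

lemma Poly_mult_mono: "Poly g \<Longrightarrow> Poly (\<lambda>p. (c * fst p ^ i * snd p ^ j) * g p)"
proof (induction rule: Poly.induct)
  case (mono c' i' j')
  have "(\<lambda>p. (c * fst p ^ i * snd p ^ j) * (c' * fst p ^ i' * snd p ^ j')) =
        (\<lambda>p. (c * c') * fst p ^ (i + i') * snd p ^ (j + j'))"
    by (auto simp: power_add)
  then show ?case using Poly.mono by metis
next
  case (add f g)
  have "(\<lambda>p. (c * fst p ^ i * snd p ^ j) * (f p + g p)) =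
        (\<lambda>p. (c * fst p ^ i * snd p ^ j) * f p + (c * fst p ^ i * snd p ^ j) * g p)"
    by (auto simp: distrib_left)
  then show ?case using Poly.add[OF add.IH] by metis
qed

lemma Poly_mult: "Poly f \<Longrightarrow> Poly g \<Longrightarrow> Poly (\<lambda>p. f p * g p)"
proof (induction arbitrary: g rule: Poly.induct)
  case (mono c i j)
  then show ?case by (rule Poly_mult_mono)
next
  case (add f1 f2)
  have "(\<lambda>p. (f1 p + f2 p) * g p) = (\<lambda>p. f1 p * g p + f2 p * g p)"
    by (auto simp: distrib_right)
  then show ?case using Poly.add[OF add.IH(1)[OF add.prems] add.IH(2)[OF add.prems]] by metis
qed

lemma Poly_const: "Poly (\<lambda>p. c)"
  using Poly.mono[of c 0 0] by simp

lemma Poly_cont: "Poly f \<Longrightarrow> continuous_on S f"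
  by (induction rule: Poly.induct) (auto intro!: continuous_intros)

lemma Poly_fst: "Poly fst"
  using Poly.mono[of 1 1 0] by simp

lemma Poly_snd: "Poly snd"
  using Poly.mono[of 1 0 1] by simp

lemma compact_omega_cl: "compact (omega_cl L)"
  unfolding omega_cl_def by (intro compact_Times compact_Icc)

lemma Poly_SW:
  assumes "continuous_on (omega_cl L) f" "e > 0"
  shows "\<exists>g. Poly g \<and> (\<forall>x\<in>omega_cl L. \<bar>f x - g x\<bar> < e)"
proof (rule Stone_Weierstrass_HOL[OF compact_omega_cl _ _ _ _ _ assms])
  show "Poly (\<lambda>x. c)" for c by (rule Poly_const)
  show "Poly f \<Longrightarrow> continuous_on (omega_cl L) f" for f by (rule Poly_cont)
  show "Poly f \<and> Poly g \<Longrightarrow> Poly (\<lambda>x. f x + g x)" for f g by (auto intro: Poly.add)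
  show "Poly f \<and> Poly g \<Longrightarrow> Poly (\<lambda>x. f x * g x)" for f g by (auto intro: Poly_mult)
  show "x \<in> omega_cl L \<and> y \<in> omega_cl L \<and> x \<noteq> y \<Longrightarrow> \<exists>f. Poly f \<and> f x \<noteq> f y" for x y
    using Poly_fst Poly_snd by (metis prod_eq_iff)
qed

context curveLZ
begin

lemma Poly_U: "Poly f \<Longrightarrow> U f"
  by (induction rule: Poly.induct) (auto intro: U_mono U_add)

lemma cont_approx:
  assumes "continuous_on (omega_cl L) f" "e > 0"
  shows "\<exists>H. ach H \<and> (\<forall>p\<in>omega L. \<bar>f p - H p\<bar> < e)"
proof -
  obtain g where g: "Poly g" "\<forall>x\<in>omega_cl L. \<bar>f x - g x\<bar> < e/2"
    using Poly_SW[OF assms(1)] assms(2) by (meson half_gt_zero)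
  obtain H where H: "ach H" "\<forall>p\<in>omega L. \<bar>g p - H p\<bar> < e/2"
    using Poly_U[OF g(1)] assms(2) unfolding U_def by (meson half_gt_zero)
  have "\<forall>p\<in>omega L. \<bar>f p - H p\<bar> < e"
  proof
    fix p assume p: "p \<in> omega L"
    then have "\<bar>f p - g p\<bar> < e/2" "\<bar>g p - H p\<bar> < e/2" using g(2) H(2) omega_sub by auto
    then show "\<bar>f p - H p\<bar> < e" by linarith
  qed
  then show ?thesis using H(1) by blast
qed

end




lemma omega_open: "open (omega L)"
  unfolding omega_def by (intro open_Times open_greaterThanLessThan)

lemma omega_bounded: "bounded (omega L)"
proof -
  have "bounded ({0..L} \<times> {0..1::real})"
    by (intro bounded_Times compact_imp_bounded compact_Icc)
  then show ?thesis by (rule bounded_subset) (auto simp: omega_def)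
qed

lemma omega_lmeas: "omega L \<in> lmeasurable"
  by (rule lmeasurable_open[OF omega_bounded omega_open])

lemma omega_leb: "omega L \<in> sets lebesgue"
  using omega_lmeas by (rule fmeasurableD)

lemma omega_fin: "emeasure (lebesgue_on (omega L)) (omega L) < \<infinity>"
proof -
  have "emeasure (lebesgue_on (omega L)) (omega L) = emeasure lebesgue (omega L)"
    by (rule emeasure_restrict_space) (use omega_leb in auto)
  moreover have "emeasure lebesgue (omega L) < \<infinity>"
    using omega_lmeas unfolding fmeasurable_def by blast
  ultimately show ?thesis by simp
qed

lemma cont_meas: "continuous_on UNIV f \<Longrightarrow> f \<in> borel_measurable (lebesgue_on (omega L))"
  by (rule continuous_imp_measurable_on_sets_lebesgue[OF continuous_on_subset[OF _ subset_UNIV] omega_leb])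

definition T :: "real \<Rightarrow> real \<Rightarrow> real" where
  "T m y = max (- m) (min m y)"

lemma T_cont: "continuous_on UNIV (T m)"
  unfolding T_def by (intro continuous_intros)

lemma T_bound: "m \<ge> 0 \<Longrightarrow> (T m a - T m b)\<^sup>2 \<le> 4 * m\<^sup>2"
proof -
  assume m: "m \<ge> 0"
  have "\<bar>T m a - T m b\<bar> \<le> 2 * m" using m by (simp add: T_def)
  then have "\<bar>T m a - T m b\<bar>\<^sup>2 \<le> (2 * m)\<^sup>2" by (intro power_mono) auto
  then show ?thesis by (simp add: power_mult_distrib)
qed

lemma T_close: "m \<ge> 0 \<Longrightarrow> (T m y - y)\<^sup>2 \<le> y\<^sup>2"
proof -
  assume "m \<ge> 0"
  then have "\<bar>T m y - y\<bar> \<le> \<bar>y\<bar>" unfolding T_def by (auto simp: max_def min_def abs_if)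
  then have "\<bar>T m y - y\<bar>\<^sup>2 \<le> \<bar>y\<bar>\<^sup>2" by (intro power_mono) auto
  then show ?thesis by simp
qed

lemma T_eventually: "(\<lambda>m::nat. T (real m) y) \<longlonglongrightarrow> y"
proof (rule tendsto_eventually)
  obtain N :: nat where "\<bar>y\<bar> \<le> real N" using real_arch_simple by blast
  then show "\<forall>\<^sub>F m in sequentially. T (real m) y = y"
    unfolding eventually_sequentially by (intro exI[of _ N]) (auto simp: T_def)
qed

lemma ennreal_small:
  fixes f :: "nat \<Rightarrow> ennreal"
  assumes "f \<longlonglongrightarrow> 0" "e > 0"
  shows "\<exists>n. f n < ennreal e"
proof -
  have "\<forall>\<^sub>F n in sequentially. f n < ennreal e"
    using assms by (intro order_tendstoD(2)) auto
  then show ?thesis unfolding eventually_sequentially by auto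
qed

lemma L2_cont_approx:
  assumes g: "g \<in> L2 L" and e: "e > 0"
  shows "\<exists>G. continuous_on UNIV G \<and> (\<integral>\<^sup>+ p. ennreal ((G p - g p)\<^sup>2) \<partial>lebesgue_on (omega L)) < ennreal e"
proof -
  define M where "M = lebesgue_on (omega L)"
  have gm[measurable]: "g \<in> borel_measurable M" and gi: "(\<integral>\<^sup>+ p. ennreal ((g p)\<^sup>2) \<partial>M) < \<infinity>"
    using g by (auto simp: L2_def M_def)
  have spM: "space M = omega L" by (simp add: M_def)
  have "g measurable_on omega L"
    using gm omega_leb by (simp add: measurable_on_iff_borel_measurable M_def)
  then obtain N c where N: "negligible N" and c: "\<And>n. continuous_on UNIV (c n)"
     and conv: "\<And>x. x \<notin> N \<Longrightarrow> (\<lambda>n. c n x) \<longlonglongrightarrow> (if x \<in> omega L then g x else 0)"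
    unfolding measurable_on_def by blast
  have cm[measurable]: "c n \<in> borel_measurable M" for n unfolding M_def by (rule cont_meas[OF c])
  have Tm[measurable]: "T m \<in> borel_measurable borel" for m
    by (rule borel_measurable_continuous_onI[OF T_cont])
  have AEN: "AE x in M. x \<notin> N"
  proof (rule AE_I')
    show "N \<inter> omega L \<in> null_sets M"
      unfolding M_def using N omega_leb
      by (simp add: null_sets_restrict_space negligible_iff_null_sets null_set_Int2)
    show "{x \<in> space M. \<not> x \<notin> N} \<subseteq> N \<inter> omega L" by (auto simp: spM)
  qed
  have lim1: "(\<lambda>m::nat. \<integral>\<^sup>+ p. ennreal ((T (real m) (g p) - g p)\<^sup>2) \<partial>M) \<longlonglongrightarrow> (\<integral>\<^sup>+ p. ennreal 0 \<partial>M)"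
  proof (rule nn_integral_dominated_convergence[where w="\<lambda>p. ennreal ((g p)\<^sup>2)"])
    show "\<And>j. AE x in M. ennreal ((T (real j) (g x) - g x)\<^sup>2) \<le> ennreal ((g x)\<^sup>2)"
      using T_close by (auto intro: ennreal_leI)
    show "(\<integral>\<^sup>+ x. ennreal ((g x)\<^sup>2) \<partial>M) < \<infinity>" by (rule gi)
    show "AE x in M. (\<lambda>i. ennreal ((T (real i) (g x) - g x)\<^sup>2)) \<longlonglongrightarrow> ennreal 0"
      by (intro AE_I2 tendsto_ennrealI) (use T_eventually in \<open>auto intro!: tendsto_eq_intros\<close>)
  qed measurable
  obtain m where m: "(\<integral>\<^sup>+ p. ennreal ((T (real m) (g p) - g p)\<^sup>2) \<partial>M) < ennreal (e/8)"
    using ennreal_small[OF lim1[simplified], of "e/8"] e by auto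
  have lim2: "(\<lambda>n. \<integral>\<^sup>+ p. ennreal ((T (real m) (c n p) - T (real m) (g p))\<^sup>2) \<partial>M) \<longlonglongrightarrow> (\<integral>\<^sup>+ p. ennreal 0 \<partial>M)"
  proof (rule nn_integral_dominated_convergence[where w="\<lambda>p. ennreal (4 * (real m)\<^sup>2)"])
    show "\<And>j. AE x in M. ennreal ((T (real m) (c j x) - T (real m) (g x))\<^sup>2) \<le> ennreal (4 * (real m)\<^sup>2)"
      using T_bound by (auto intro: ennreal_leI)
    show "(\<integral>\<^sup>+ x. ennreal (4 * (real m)\<^sup>2) \<partial>M) < \<infinity>"
      using omega_fin by (simp add: M_def ennreal_mult_less_top)
    show "AE x in M. (\<lambda>i. ennreal ((T (real m) (c i x) - T (real m) (g x))\<^sup>2)) \<longlonglongrightarrow> ennreal 0"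
      using AEN AE_space
    proof eventually_elim
      case (elim x)
      show ?case
      proof (cases "x \<in> omega L")
        case True
        then have "(\<lambda>n. c n x) \<longlonglongrightarrow> g x" using conv[OF elim(1)] by simp
        then have "(\<lambda>n. T (real m) (c n x)) \<longlonglongrightarrow> T (real m) (g x)"
          using T_cont continuous_on_tendsto_compose[OF T_cont] by auto
        then have "(\<lambda>n. (T (real m) (c n x) - T (real m) (g x))\<^sup>2) \<longlonglongrightarrow> (T (real m) (g x) - T (real m) (g x))\<^sup>2"
          by (intro tendsto_intros)
        then show ?thesis by (intro tendsto_ennrealI) simp
      next
        case False
        then show ?thesis using elim spM by simp
      qed
    qed
  qed measurable
  obtain n where n: "(\<integral>\<^sup>+ p. ennreal ((T (real m) (c n p) - T (real m) (g p))\<^sup>2) \<partial>M) < ennreal (e/8)"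
    using ennreal_small[OF lim2[simplified], of "e/8"] e by auto
  define G where "G = (\<lambda>x. T (real m) (c n x))"
  have Gc: "continuous_on UNIV G"
    unfolding G_def by (rule continuous_on_compose2[OF T_cont c]) auto
  have "(\<integral>\<^sup>+ p. ennreal ((G p - g p)\<^sup>2) \<partial>M) \<le>
        (\<integral>\<^sup>+ p. 2 * ennreal ((T (real m) (c n p) - T (real m) (g p))\<^sup>2) + 2 * ennreal ((T (real m) (g p) - g p)\<^sup>2) \<partial>M)"
  proof (rule nn_integral_mono)
    fix p
    define a where "a = T (real m) (c n p) - T (real m) (g p)"
    define b where "b = T (real m) (g p) - g p"
    have "G p - g p = a + b" by (simp add: a_def b_def G_def)
    have ab: "(a + b)\<^sup>2 \<le> 2 * a\<^sup>2 + 2 * b\<^sup>2"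
      using zero_le_power2[of "a - b"] unfolding power2_eq_square by (simp add: algebra_simps)
    then have "(G p - g p)\<^sup>2 \<le> 2 * a\<^sup>2 + 2 * b\<^sup>2" using \<open>G p - g p = a + b\<close> by simp
    then have "ennreal ((G p - g p)\<^sup>2) \<le> ennreal (2 * a\<^sup>2 + 2 * b\<^sup>2)" by (rule ennreal_leI)
    also have "\<dots> = ennreal (2 * a\<^sup>2) + ennreal (2 * b\<^sup>2)"
      by (rule ennreal_plus) auto
    also have "\<dots> = 2 * ennreal (a\<^sup>2) + 2 * ennreal (b\<^sup>2)"
      by (simp add: ennreal_mult)
    finally show "ennreal ((G p - g p)\<^sup>2) \<le> 2 * ennreal ((T (real m) (c n p) - T (real m) (g p))\<^sup>2) + 2 * ennreal ((T (real m) (g p) - g p)\<^sup>2)"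
      by (simp add: a_def b_def)
  qed
  also have "\<dots> = 2 * (\<integral>\<^sup>+ p. ennreal ((T (real m) (c n p) - T (real m) (g p))\<^sup>2) \<partial>M) + 2 * (\<integral>\<^sup>+ p. ennreal ((T (real m) (g p) - g p)\<^sup>2) \<partial>M)"
    by (subst nn_integral_add) (auto simp: nn_integral_cmult)
  also have "\<dots> \<le> 2 * ennreal (e/8) + 2 * ennreal (e/8)"
    using m n by (intro add_mono mult_left_mono) auto
  also have "\<dots> = ennreal (2 * (e/8)) + ennreal (2 * (e/8))"
    using ennreal_mult[of 2 "e/8"] e by (simp only: ennreal_numeral)
  also have "\<dots> = ennreal (2 * (e/8) + 2 * (e/8))"
    using e by (intro ennreal_plus[symmetric]) auto
  also have "\<dots> = ennreal (e/2)" by simp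
  also have "\<dots> < ennreal e" using e by (simp add: ennreal_less_iff)
  finally show ?thesis using Gc unfolding M_def by blast
qed




context curveLZ
begin

lemma approx_L2:
  assumes g: "g \<in> L2 L" and e: "e > 0"
  shows "\<exists>v. good v \<and> (\<integral>\<^sup>+ p. ennreal ((pd1 L (\<lambda>q. v q $ 1) p - g p)\<^sup>2) \<partial>lebesgue_on (omega L)) < ennreal e"
proof -
  define M where "M = lebesgue_on (omega L)"
  have spM: "space M = omega L" by (simp add: M_def)
  have gm[measurable]: "g \<in> borel_measurable M" using g by (auto simp: L2_def M_def)
  obtain G where Gc: "continuous_on UNIV G" and Gi: "(\<integral>\<^sup>+ p. ennreal ((G p - g p)\<^sup>2) \<partial>M) < ennreal (e/8)"
    using L2_cont_approx[OF g, of "e/8"] e by (auto simp: M_def)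
  have Gm[measurable]: "G \<in> borel_measurable M" unfolding M_def by (rule cont_meas[OF Gc])
  define R where "R = enn2real (emeasure M (space M))"
  have muR: "emeasure M (space M) = ennreal R"
    using omega_fin[of L] unfolding R_def M_def by (simp add: ennreal_enn2real_if less_top)
  have R0: "R \<ge> 0" by (simp add: R_def)
  define \<eta> where "\<eta> = min 1 (e / (8 * (R + 1)))"
  have eta: "\<eta> > 0" using e R0 by (simp add: \<eta>_def)
  have eta2: "2 * \<eta>\<^sup>2 * R \<le> e / 4"
  proof -
    have "\<eta> \<le> 1" by (simp add: \<eta>_def)
    then have "\<eta> * \<eta> \<le> \<eta>" using eta by (intro mult_left_le) auto
    then have "\<eta>\<^sup>2 \<le> \<eta>" by (simp add: power2_eq_square)
    also have "\<dots> \<le> e / (8 * (R + 1))" by (simp add: \<eta>_def)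
    finally have "2 * \<eta>\<^sup>2 * R \<le> 2 * (e / (8 * (R + 1))) * R" using R0 by (intro mult_right_mono) auto
    also have "\<dots> \<le> e / 4" using R0 e by (simp add: field_simps)
    finally show ?thesis .
  qed
  obtain H where H: "ach H" "\<forall>p\<in>omega L. \<bar>G p - H p\<bar> < \<eta>"
    using cont_approx[OF continuous_on_subset[OF Gc subset_UNIV] eta] by blast
  obtain v where v: "good v" "\<forall>p\<in>omega L. pd1 L (\<lambda>q. v q $ 1) p = H p"
    using H(1) unfolding ach_def by blast
  have "(\<integral>\<^sup>+ p. ennreal ((pd1 L (\<lambda>q. v q $ 1) p - g p)\<^sup>2) \<partial>M) = (\<integral>\<^sup>+ p. ennreal ((H p - g p)\<^sup>2) \<partial>M)"
    by (rule nn_integral_cong) (use v(2) spM in auto)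
  also have "\<dots> \<le> (\<integral>\<^sup>+ p. ennreal (2 * \<eta>\<^sup>2) + 2 * ennreal ((G p - g p)\<^sup>2) \<partial>M)"
  proof (rule nn_integral_mono)
    fix p assume "p \<in> space M"
    then have p: "p \<in> omega L" by (simp add: spM)
    define a where "a = H p - G p"
    define b where "b = G p - g p"
    have a: "\<bar>a\<bar> \<le> \<eta>" using H(2) p by (simp add: a_def abs_minus_commute less_imp_le)
    have "a\<^sup>2 \<le> \<eta>\<^sup>2" using a by (metis abs_ge_zero power2_abs power_mono)
    moreover have "(a + b)\<^sup>2 \<le> 2 * a\<^sup>2 + 2 * b\<^sup>2"
      using zero_le_power2[of "a - b"] unfolding power2_eq_square by (simp add: algebra_simps)
    ultimately have "(H p - g p)\<^sup>2 \<le> 2 * \<eta>\<^sup>2 + 2 * b\<^sup>2" by (simp add: a_def b_def)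
    then have "ennreal ((H p - g p)\<^sup>2) \<le> ennreal (2 * \<eta>\<^sup>2 + 2 * b\<^sup>2)" by (rule ennreal_leI)
    also have "\<dots> = ennreal (2 * \<eta>\<^sup>2) + ennreal (2 * b\<^sup>2)" by (rule ennreal_plus) auto
    also have "\<dots> = ennreal (2 * \<eta>\<^sup>2) + 2 * ennreal (b\<^sup>2)" by (simp add: ennreal_mult)
    finally show "ennreal ((H p - g p)\<^sup>2) \<le> ennreal (2 * \<eta>\<^sup>2) + 2 * ennreal ((G p - g p)\<^sup>2)"
      by (simp add: b_def)
  qed
  also have "\<dots> = ennreal (2 * \<eta>\<^sup>2) * emeasure M (space M) + 2 * (\<integral>\<^sup>+ p. ennreal ((G p - g p)\<^sup>2) \<partial>M)"
    by (subst nn_integral_add) (auto simp: nn_integral_cmult)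
  also have "\<dots> = ennreal (2 * \<eta>\<^sup>2 * R) + 2 * (\<integral>\<^sup>+ p. ennreal ((G p - g p)\<^sup>2) \<partial>M)"
    using R0 by (simp add: muR ennreal_mult)
  also have "\<dots> \<le> ennreal (e/4) + 2 * ennreal (e/8)"
    using eta2 Gi by (intro add_mono mult_left_mono ennreal_leI) auto
  also have "\<dots> = ennreal (e/4) + ennreal (e/4)"
    using ennreal_mult[of 2 "e/8"] e by (simp only: ennreal_numeral) simp
  also have "\<dots> = ennreal (e/2)"
    using e by (subst ennreal_plus[symmetric]) auto
  also have "\<dots> < ennreal e" using e by (simp add: ennreal_less_iff)
  finally show ?thesis using v(1) unfolding M_def by blast
qed

lemma calG_eq: "calG L \<gamma> = L2 L"
proof
  show "calG L \<gamma> \<subseteq> L2 L" unfolding calG_def by blast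
next
  show "L2 L \<subseteq> calG L \<gamma>"
  proof
    fix g assume g: "g \<in> L2 L"
    define I where "I = (\<lambda>v :: real \<times> real \<Rightarrow> real^3. \<integral>\<^sup>+ p. ennreal ((pd1 L (\<lambda>q. v q $ 1) p - g p)\<^sup>2) \<partial>lebesgue_on (omega L))"
    define V where "V = (\<lambda>\<epsilon>::real. SOME v. good v \<and> I v < ennreal \<epsilon>)"
    have V: "good (V \<epsilon>) \<and> I (V \<epsilon>) < ennreal \<epsilon>" if "\<epsilon> > 0" for \<epsilon>
    proof -
      have ex: "\<exists>v. good v \<and> I v < ennreal \<epsilon>" using approx_L2[OF g that] unfolding I_def .
      show ?thesis using someI_ex[OF ex] unfolding V_def .
    qed
    have lim: "((\<lambda>\<epsilon>. I (V \<epsilon>)) \<longlongrightarrow> 0) (at_right 0)"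
    proof (rule order_tendstoI)
      fix a :: ennreal assume "a < 0" then show "\<forall>\<^sub>F x in at_right 0. a < I (V x)" by simp
    next
      fix a :: ennreal assume a: "0 < a"
      define b where "b = (if a = top then 1 else enn2real a)"
      have b: "b > 0" using a by (auto simp: b_def enn2real_positive_iff less_top)
      have "I (V y) < a" if "0 < y" "y < b" for y
      proof -
        have "ennreal y < a"
        proof (cases "a = top")
          case True then show ?thesis by simp
        next
          case False
          then have "a = ennreal (enn2real a)" by (simp add: ennreal_enn2real_if less_top)
          moreover have "ennreal y < ennreal (enn2real a)"
            using that False by (simp add: b_def ennreal_less_iff)
          ultimately show ?thesis by simp
        qed
        then show ?thesis using V[OF that(1)] by (meson order.strict_trans)
      qed
      then show "\<forall>\<^sub>F x in at_right 0. I (V x) < a"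
        unfolding eventually_at_right[OF b] by (intro exI[of _ b]) (use b in auto)
    qed
    have "\<forall>\<epsilon>>0. Ck_rect L 5 (V \<epsilon>) \<and>
         (\<forall>p\<in>omega L.
            pd2 L (\<lambda>q. V \<epsilon> q $ 1) p + pd1 L (V \<epsilon>) p \<bullet> tang \<gamma> (snd p) = 0 \<and>
            pd2 L (V \<epsilon>) p \<bullet> tang \<gamma> (snd p) = 0)"
      using V unfolding good_def by blast
    then show "g \<in> calG L \<gamma>"
      unfolding calG_def using g lim unfolding I_def by blast
  qed
qed

end



theorem mainTheorem6:
  fixes L :: real and \<gamma> :: "real \<Rightarrow> real^3"
  assumes "L > 0"
    and planar: "\<forall>s\<in>{0..1}. \<gamma> s $ 1 = 0"
    and smooth: "Ck_interval 6 \<gamma>"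
    and simple: "inj_on \<gamma> {0..1}"
    and arclength: "\<forall>s\<in>{0..1}. norm (tang \<gamma> s) = 1"
    and finite_zeros: "finite {s\<in>{0..1}. curv \<gamma> s = 0}"
  shows "calG L \<gamma> = L2 L"
proof -
  interpret curveLZ \<gamma> L
    by unfold_locales (use assms in auto)
  show ?thesis by (rule calG_eq)
qed

end
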